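(* Let $X$ be the space of all sequences of the form $c=\sum_{k=1}^N a_k\star b_k$ (finite sums) with $a_k,b_k$ finitely supported, normed by $\|c\|_X=\inf\sum_{k=1}^N\|a_k\|_{\ell^2}\|b_k\|_{\ell^2}$ over all such finite representations, and let $\mathcal{X}$ be its Banach space completion. Let $\mathcal{Y}$ be the space of sequences $c=\sum_{k=1}^\infty a_k\star b_k$ with $a_k,b_k\in\ell^2(\mathbb{N})$, $\sum_k\|a_k\|_{\ell^2}\|b_k\|_{\ell^2}<\infty$, normed by $\|c\|_{\mathcal{Y}}=\inf\sum_{k=1}^\infty\|a_k\|_{\ell^2}\|b_k\|_{\ell^2}$ over all such representations. Then the inclusion map $V\colon X\to\mathcal{Y}$ extends to an isometric isomorphism $V\colon\mathcal{X}\to\mathcal{Y}$.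
   Context: Dirichlet convolution: $(a\star b)(n)=\sum_{k\mid n}a(k)\overline{b(n/k)}$ for sequences $a,b\colon\mathbb{N}\to\mathbb{C}$; series in the definition of $\mathcal{Y}$ converge coordinatewise. *)

theory Defs
  imports "HOL-Analysis.Analysis"
begin

text \<open>Sequences on the positive integers are modelled as functions nat => complex;
  index 0 is not part of the index set and the sequences considered vanish there.\<close>

definition dconv :: "(nat \<Rightarrow> complex) \<Rightarrow> (nat \<Rightarrow> complex) \<Rightarrow> nat \<Rightarrow> complex" where
  "dconv a b n = (if n = 0 then 0 else (\<Sum>k | k dvd n. a k * cnj (b (n div k))))"

definition fin_supp :: "(nat \<Rightarrow> complex) \<Rightarrow> bool" where
  "fin_supp a \<longleftrightarrow> a 0 = 0 \<and> finite {n. a n \<noteq> 0}"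

definition in_l2 :: "(nat \<Rightarrow> complex) \<Rightarrow> bool" where
  "in_l2 a \<longleftrightarrow> a 0 = 0 \<and> summable (\<lambda>n. (cmod (a n))\<^sup>2)"

definition l2norm :: "(nat \<Rightarrow> complex) \<Rightarrow> real" where
  "l2norm a = sqrt (\<Sum>n. (cmod (a n))\<^sup>2)"

definition X_rep :: "(nat \<Rightarrow> complex) \<Rightarrow> nat \<Rightarrow> (nat \<Rightarrow> nat \<Rightarrow> complex)
    \<Rightarrow> (nat \<Rightarrow> nat \<Rightarrow> complex) \<Rightarrow> bool" where
  "X_rep c N a b \<longleftrightarrow> (\<forall>k<N. fin_supp (a k) \<and> fin_supp (b k))
      \<and> c = (\<lambda>n. \<Sum>k<N. dconv (a k) (b k) n)"

definition Xspace :: "(nat \<Rightarrow> complex) set" where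
  "Xspace = {c. \<exists>N a b. X_rep c N a b}"

definition Xnorm :: "(nat \<Rightarrow> complex) \<Rightarrow> real" where
  "Xnorm c = Inf {\<Sum>k<N. l2norm (a k) * l2norm (b k) | N a b. X_rep c N a b}"

definition Y_rep :: "(nat \<Rightarrow> complex) \<Rightarrow> (nat \<Rightarrow> nat \<Rightarrow> complex)
    \<Rightarrow> (nat \<Rightarrow> nat \<Rightarrow> complex) \<Rightarrow> bool" where
  "Y_rep c a b \<longleftrightarrow> (\<forall>k. in_l2 (a k) \<and> in_l2 (b k))
      \<and> summable (\<lambda>k. l2norm (a k) * l2norm (b k))
      \<and> (\<forall>n. (\<lambda>k. dconv (a k) (b k) n) sums c n)"

definition Yspace :: "(nat \<Rightarrow> complex) set" where
  "Yspace = {c. \<exists>a b. Y_rep c a b}"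

definition Ynorm :: "(nat \<Rightarrow> complex) \<Rightarrow> real" where
  "Ynorm c = Inf {(\<Sum>k. l2norm (a k) * l2norm (b k)) | a b. Y_rep c a b}"

end

theory Submission
  imports Defs "HOL-Computational_Algebra.Primes"
begin


lemma in_l2_zero0: "in_l2 a \<Longrightarrow> a 0 = 0" by (simp add: in_l2_def)

lemma l2norm_nonneg: "in_l2 a \<Longrightarrow> 0 \<le> l2norm a"
  unfolding l2norm_def in_l2_def by (auto intro!: suminf_nonneg)

lemma l2norm_sq: "in_l2 a \<Longrightarrow> (l2norm a)\<^sup>2 = (\<Sum>n. (cmod (a n))\<^sup>2)"
  unfolding l2norm_def in_l2_def by (auto intro!: suminf_nonneg)

lemma finsum_le_l2sq: "in_l2 a \<Longrightarrow> finite A \<Longrightarrow> (\<Sum>n\<in>A. (cmod (a n))\<^sup>2) \<le> (l2norm a)\<^sup>2"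
  by (simp add: l2norm_sq in_l2_def sum_le_suminf)

lemma L2_le_l2norm: "in_l2 a \<Longrightarrow> finite A \<Longrightarrow> L2_set (\<lambda>n. cmod (a n)) A \<le> l2norm a"
  unfolding L2_set_def using finsum_le_l2sq[of a A] l2norm_nonneg[of a]
  by (metis real_le_lsqrt sum_nonneg zero_le_power2)

lemma in_l2_mono:
  assumes "in_l2 b" "a 0 = 0" "\<And>n. cmod (a n) \<le> cmod (b n)"
  shows "in_l2 a" "l2norm a \<le> l2norm b"
proof -
  have le: "\<And>n. (cmod (a n))\<^sup>2 \<le> (cmod (b n))\<^sup>2"
    using assms(3) by (simp add: power_mono)
  have s: "summable (\<lambda>n. (cmod (a n))\<^sup>2)"
    by (rule summable_comparison_test[of _ "\<lambda>n. (cmod (b n))\<^sup>2"]) (use assms le in \<open>auto simp: in_l2_def\<close>)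
  thus "in_l2 a" using assms by (simp add: in_l2_def)
  show "l2norm a \<le> l2norm b" unfolding l2norm_def
    using assms s le by (auto intro!: suminf_le simp: in_l2_def)
qed

lemma fin_supp_in_l2:
  assumes "fin_supp a" shows "in_l2 a"
proof -
  have f: "finite {n. a n \<noteq> 0}" and z: "a 0 = 0" using assms by (auto simp: fin_supp_def)
  have "summable (\<lambda>n. (cmod (a n))\<^sup>2)"
    by (rule summable_finite[of "{n. a n \<noteq> 0}"]) (use f in auto)
  thus ?thesis using z by (simp add: in_l2_def)
qed

lemma dconv_abs_le:
  "cmod (dconv a b n) \<le> (\<Sum>k | k dvd n. cmod (a k) * cmod (b (n div k)))"
  unfolding dconv_def
  by (auto intro!: order.trans[OF norm_sum] simp: norm_mult sum_nonneg)

lemma dvd_set_finite: "n > 0 \<Longrightarrow> finite {k::nat. k dvd n}"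
  by (rule finite_subset[of _ "{..n}"]) (auto dest: dvd_imp_le)

lemma dconv_bound:
  assumes "in_l2 a" "in_l2 b"
  shows "cmod (dconv a b n) \<le> l2norm a * l2norm b"
proof (cases "n = 0")
  case True thus ?thesis using assms by (simp add: dconv_def l2norm_nonneg)
next
  case False
  let ?D = "{k. k dvd n}"
  have fin: "finite ?D" using False dvd_set_finite by auto
  have inj: "inj_on (\<lambda>k. n div k) ?D"
  proof
    fix x y assume "x \<in> ?D" "y \<in> ?D" "n div x = n div y"
    thus "x = y" using False
      by (metis dvd_div_mult_self mem_Collect_eq nat_mult_eq_cancel_disj div_mult_self1_is_m
          div_eq_0_iff dvd_div_eq_0_iff bot_nat_0.not_eq_extremum dvd_mult_div_cancel)
  qed
  have "cmod (dconv a b n) \<le> (\<Sum>k\<in>?D. cmod (a k) * cmod (b (n div k)))"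
    by (rule dconv_abs_le)
  also have "\<dots> \<le> L2_set (\<lambda>k. cmod (a k)) ?D * L2_set (\<lambda>k. cmod (b (n div k))) ?D"
    using L2_set_mult_ineq[where f="\<lambda>k. cmod (a k)" and A="?D" and g="\<lambda>k. cmod (b (n div k))"] by simp
  also have "L2_set (\<lambda>k. cmod (b (n div k))) ?D = L2_set (\<lambda>k. cmod (b k)) ((\<lambda>k. n div k) ` ?D)"
    unfolding L2_set_def using sum.reindex[OF inj, of "\<lambda>k. (cmod (b k))\<^sup>2"] by simp
  also have "L2_set (\<lambda>k. cmod (a k)) ?D * \<dots> \<le> l2norm a * l2norm b"
    using fin by (intro mult_mono L2_le_l2norm assms l2norm_nonneg) auto
  finally show ?thesis .
qed


abbreviation cost :: "(nat \<Rightarrow> nat \<Rightarrow> complex) \<Rightarrow> (nat \<Rightarrow> nat \<Rightarrow> complex) \<Rightarrow> nat \<Rightarrow> real" where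
  "cost a b k \<equiv> l2norm (a k) * l2norm (b k)"

lemma Y_rep_cost_nonneg: "Y_rep c a b \<Longrightarrow> 0 \<le> cost a b k"
  by (auto simp: Y_rep_def intro!: mult_nonneg_nonneg l2norm_nonneg)

lemma Y_rep_sum_nonneg: "Y_rep c a b \<Longrightarrow> 0 \<le> (\<Sum>k. cost a b k)"
  using Y_rep_cost_nonneg by (auto intro!: suminf_nonneg simp: Y_rep_def)

lemma Ynorm_bdd: "bdd_below {(\<Sum>k. l2norm (a k) * l2norm (b k)) | a b. Y_rep c a b}"
  by (rule bdd_belowI[of _ 0]) (auto intro: Y_rep_sum_nonneg)

lemma Ynorm_le: "Y_rep c a b \<Longrightarrow> Ynorm c \<le> (\<Sum>k. cost a b k)"
  unfolding Ynorm_def by (rule cInf_lower[OF _ Ynorm_bdd]) auto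

lemma Ynorm_nonneg: "c \<in> Yspace \<Longrightarrow> 0 \<le> Ynorm c"
  unfolding Ynorm_def Yspace_def by (rule cInf_greatest) (auto intro: Y_rep_sum_nonneg)

lemma Ynorm_approx:
  assumes "c \<in> Yspace" "e > 0"
  shows "\<exists>a b. Y_rep c a b \<and> (\<Sum>k. cost a b k) < Ynorm c + e"
proof -
  have ne: "{(\<Sum>k. l2norm (a k) * l2norm (b k)) | a b. Y_rep c a b} \<noteq> {}"
    using assms by (auto simp: Yspace_def)
  have "Inf {(\<Sum>k. l2norm (a k) * l2norm (b k)) | a b. Y_rep c a b} < Ynorm c + e"
    using assms by (simp add: Ynorm_def)
  from cInf_lessD[OF ne this] show ?thesis by auto
qed

lemma Y_rep_coord:
  assumes "Y_rep c a b"
  shows "cmod (c n) \<le> (\<Sum>k. cost a b k)"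
proof -
  have r: "\<And>k. in_l2 (a k) \<and> in_l2 (b k)" and s: "summable (cost a b)"
    and sm: "(\<lambda>k. dconv (a k) (b k) n) sums c n"
    using assms by (auto simp: Y_rep_def)
  have le: "\<And>k. norm (dconv (a k) (b k) n) \<le> cost a b k" using r dconv_bound by blast
  have ns: "summable (\<lambda>k. norm (dconv (a k) (b k) n))"
    by (rule summable_comparison_test[OF _ s]) (use le in auto)
  have "cmod (c n) = norm (\<Sum>k. dconv (a k) (b k) n)" using sm by (simp add: sums_iff)
  also have "\<dots> \<le> (\<Sum>k. norm (dconv (a k) (b k) n))" by (rule summable_norm[OF ns])
  also have "\<dots> \<le> (\<Sum>k. cost a b k)" by (rule suminf_le[OF le ns s])
  finally show ?thesis .
qed

lemma Y_coord:
  assumes "c \<in> Yspace" shows "cmod (c n) \<le> Ynorm c"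
  unfolding Ynorm_def using assms unfolding Yspace_def
  by (intro cInf_greatest) (auto intro: Y_rep_coord)


lemma Y_combine:
  fixes a b :: "nat \<Rightarrow> nat \<Rightarrow> nat \<Rightarrow> complex"
  assumes reps: "\<And>m. Y_rep (d m) (a m) (b m)"
    and ssum: "summable (\<lambda>m. \<Sum>k. cost (a m) (b m) k)"
  defines "A \<equiv> (\<lambda>i. a (fst (prod_decode i)) (snd (prod_decode i)))"
    and "B \<equiv> (\<lambda>i. b (fst (prod_decode i)) (snd (prod_decode i)))"
  shows "Y_rep (\<lambda>n. \<Sum>m. d m n) A B"
    "(\<Sum>i. cost A B i) = (\<Sum>m. \<Sum>k. cost (a m) (b m) k)"
proof -
  define F where "F = (\<lambda>p. l2norm (a (fst p) (snd p)) * l2norm (b (fst p) (snd p)))"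
  define s where "s = (\<lambda>m. \<Sum>k. cost (a m) (b m) k)"
  have Fnn: "\<And>p. F p \<ge> 0" unfolding F_def using reps Y_rep_cost_nonneg by blast
  have rowsum: "\<And>m. summable (cost (a m) (b m))" using reps by (auto simp: Y_rep_def)
  have rowhas: "\<And>m. ((\<lambda>k. F (m, k)) has_sum s m) UNIV"
    unfolding F_def s_def using rowsum Fnn[unfolded F_def]
    by (auto intro!: sums_nonneg_imp_has_sum summable_sums)
  have snn: "\<And>m. s m \<ge> 0" unfolding s_def using reps Y_rep_sum_nonneg by blast
  have shas: "(s has_sum (\<Sum>m. s m)) UNIV"
    using ssum snn unfolding s_def by (auto intro!: sums_nonneg_imp_has_sum summable_sums)
  have Fsum: "F summable_on (Sigma UNIV (\<lambda>_. UNIV))"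
  proof -
    have "Infinite_Sum.abs_summable_on F (Sigma UNIV (\<lambda>_. UNIV))"
    proof (rule Infinite_Sum.abs_summable_on_Sigma_iff[THEN iffD2], intro conjI)
      have nF: "\<And>x. (\<lambda>y. norm (F (x, y))) = (\<lambda>y. F (x, y))" using Fnn by simp
      show "\<forall>x\<in>UNIV. Infinite_Sum.abs_summable_on (\<lambda>y. F (x, y)) UNIV"
        unfolding nF using rowhas has_sum_imp_summable by blast
      have "(\<lambda>x. infsum (\<lambda>y. norm (F (x, y))) UNIV) = s"
        unfolding nF using rowhas infsumI by blast
      moreover have "(\<lambda>x. norm (s x)) = s" using snn by simp
      ultimately show "Infinite_Sum.abs_summable_on (\<lambda>x. infsum (\<lambda>y. norm (F (x, y))) UNIV) UNIV"
        using shas has_sum_imp_summable by metis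
    qed
    thus ?thesis using Infinite_Sum.abs_summable_summable by blast
  qed
  have Fhas: "(F has_sum (\<Sum>m. s m)) (Sigma UNIV (\<lambda>_. UNIV))"
    by (rule has_sum_SigmaI[OF rowhas shas Fsum])
  have bij: "bij_betw prod_decode UNIV (Sigma UNIV (\<lambda>_. UNIV))"
    using bij_prod_decode by simp
  have "((\<lambda>i. F (prod_decode i)) has_sum (\<Sum>m. s m)) UNIV"
    by (subst has_sum_reindex_bij_betw[OF bij]) (rule Fhas)
  hence csums: "cost A B sums (\<Sum>m. s m)"
    unfolding A_def B_def F_def by (rule has_sum_imp_sums)
  thus "(\<Sum>i. cost A B i) = (\<Sum>m. \<Sum>k. cost (a m) (b m) k)"
    unfolding s_def by (simp add: sums_iff)
  have l2: "\<And>i. in_l2 (A i) \<and> in_l2 (B i)" unfolding A_def B_def using reps by (auto simp: Y_rep_def)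
  have conv: "(\<lambda>i. dconv (A i) (B i) n) sums (\<Sum>m. d m n)" for n
  proof -
    define G where "G = (\<lambda>p. dconv (a (fst p) (snd p)) (b (fst p) (snd p)) n)"
    have GF: "\<And>p. norm (G p) \<le> F p" unfolding G_def F_def
      using reps by (auto intro!: dconv_bound simp: Y_rep_def)
    have Gsum: "G summable_on (Sigma UNIV (\<lambda>_. UNIV))"
      by (rule Infinite_Sum.abs_summable_summable, rule Infinite_Sum.abs_summable_on_comparison_test'[OF Fsum]) (use GF in auto)
    have rowG: "((\<lambda>k. G (m, k)) has_sum d m n) UNIV" for m
    proof -
      have "summable (\<lambda>k. norm (G (m, k)))"
        by (rule summable_comparison_test[OF _ rowsum[of m]]) (use GF[unfolded F_def] in auto)
      moreover have "(\<lambda>k. G (m, k)) sums d m n" using reps[of m] by (simp add: Y_rep_def G_def)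
      ultimately show ?thesis by (rule norm_summable_imp_has_sum)
    qed
    have dle: "norm (d m n) \<le> s m" for m unfolding s_def by (rule Y_rep_coord[OF reps])
    have dns: "summable (\<lambda>m. norm (d m n))"
      by (rule summable_comparison_test[OF _ ssum]) (use dle[unfolded s_def] in auto)
    have "(\<lambda>m. d m n) sums (\<Sum>m. d m n)" by (rule summable_sums[OF summable_norm_cancel[OF dns]])
    hence colG: "((\<lambda>m. d m n) has_sum (\<Sum>m. d m n)) UNIV"
      by (rule norm_summable_imp_has_sum[OF dns])
    have Ghas: "(G has_sum (\<Sum>m. d m n)) (Sigma UNIV (\<lambda>_. UNIV))"
      by (rule has_sum_SigmaI[OF rowG colG Gsum])
    have "((\<lambda>i. G (prod_decode i)) has_sum (\<Sum>m. d m n)) UNIV"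
      by (subst has_sum_reindex_bij_betw[OF bij]) (rule Ghas)
    thus ?thesis unfolding G_def A_def B_def by (rule has_sum_imp_sums)
  qed
  show "Y_rep (\<lambda>n. \<Sum>m. d m n) A B"
    unfolding Y_rep_def
  proof (intro conjI allI)
    show "summable (cost A B)" by (rule sums_summable[OF csums])
  qed (use l2 conv in simp_all)
qed


lemma Y_series:
  assumes d: "\<And>m. d m \<in> Yspace" and s: "summable (\<lambda>m. Ynorm (d m))"
  shows "(\<lambda>n. \<Sum>m. d m n) \<in> Yspace \<and> Ynorm (\<lambda>n. \<Sum>m. d m n) \<le> (\<Sum>m. Ynorm (d m))"
proof -
  have key: "\<exists>a b. Y_rep (\<lambda>n. \<Sum>m. d m n) a b \<and> (\<Sum>k. cost a b k) \<le> (\<Sum>m. Ynorm (d m)) + e"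
    if e: "e > 0" for e
  proof -
    define g where "g = (\<lambda>m::nat. e/2 * (1/2::real)^m)"
    have gpos: "g m > 0" for m using e by (simp add: g_def)
    have gs: "g sums e" unfolding g_def
      using sums_mult[OF geometric_sums[of "1/2::real"], of "e/2"] by simp
    have "\<forall>m. \<exists>ab. Y_rep (d m) (fst ab) (snd ab) \<and> (\<Sum>k. cost (fst ab) (snd ab) k) < Ynorm (d m) + g m"
    proof
      fix m
      obtain a b where "Y_rep (d m) a b \<and> (\<Sum>k. cost a b k) < Ynorm (d m) + g m"
        using Ynorm_approx[OF d gpos] by blast
      thus "\<exists>ab. Y_rep (d m) (fst ab) (snd ab) \<and> (\<Sum>k. cost (fst ab) (snd ab) k) < Ynorm (d m) + g m"
        by (intro exI[of _ "(a,b)"]) simp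
    qed
    from choice[OF this] obtain f where f: "\<And>m. Y_rep (d m) (fst (f m)) (snd (f m)) \<and> (\<Sum>k. cost (fst (f m)) (snd (f m)) k) < Ynorm (d m) + g m"
      by blast
    define a where "a = (\<lambda>m. fst (f m))"
    define b where "b = (\<lambda>m. snd (f m))"
    have reps: "\<And>m. Y_rep (d m) (a m) (b m)" using f by (simp add: a_def b_def)
    have le: "\<And>m. (\<Sum>k. cost (a m) (b m) k) \<le> Ynorm (d m) + g m"
      using f by (simp add: a_def b_def less_imp_le)
    have nn: "\<And>m. 0 \<le> (\<Sum>k. cost (a m) (b m) k)" using reps Y_rep_sum_nonneg by blast
    have sg: "summable (\<lambda>m. Ynorm (d m) + g m)" using s gs summable_add sums_summable by blast
    have ssum: "summable (\<lambda>m. \<Sum>k. cost (a m) (b m) k)"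
      by (rule summable_comparison_test[OF _ sg]) (use le nn in auto)
    note comb = Y_combine[OF reps ssum]
    have "(\<Sum>m. \<Sum>k. cost (a m) (b m) k) \<le> (\<Sum>m. Ynorm (d m) + g m)"
      by (rule suminf_le[OF le ssum sg])
    also have "\<dots> = (\<Sum>m. Ynorm (d m)) + e"
      using suminf_add[OF s sums_summable[OF gs]] gs by (simp add: sums_iff)
    finally have "(\<Sum>m. \<Sum>k. cost (a m) (b m) k) \<le> (\<Sum>m. Ynorm (d m)) + e" .
    with comb show ?thesis
      by (intro exI[of _ "\<lambda>i. a (fst (prod_decode i)) (snd (prod_decode i))"]
          exI[of _ "\<lambda>i. b (fst (prod_decode i)) (snd (prod_decode i))"]) simp
  qed
  obtain a b where "Y_rep (\<lambda>n. \<Sum>m. d m n) a b" using key[of 1] by auto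
  hence mem: "(\<lambda>n. \<Sum>m. d m n) \<in> Yspace" unfolding Yspace_def by blast
  have "Ynorm (\<lambda>n. \<Sum>m. d m n) \<le> (\<Sum>m. Ynorm (d m)) + e" if ep: "e > 0" for e
  proof -
    obtain a b where "Y_rep (\<lambda>n. \<Sum>m. d m n) a b" "(\<Sum>k. cost a b k) \<le> (\<Sum>m. Ynorm (d m)) + e"
      using key[OF ep] by blast
    thus ?thesis using Ynorm_le[of "\<lambda>n. \<Sum>m. d m n" a b] by linarith
  qed
  hence "Ynorm (\<lambda>n. \<Sum>m. d m n) \<le> (\<Sum>m. Ynorm (d m))" by (rule field_le_epsilon)
  with mem show ?thesis by blast
qed

lemma sum2_suminf:
  fixes x y :: "'a::{real_normed_vector}"
  shows "summable (\<lambda>m::nat. if m = 0 then x else if m = 1 then y else 0)"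
    "(\<Sum>m::nat. if m = 0 then x else if m = 1 then y else 0) = x + y"
proof -
  have z: "\<And>m. m \<notin> {0, 1::nat} \<Longrightarrow> (if m = 0 then x else if m = 1 then y else 0) = 0" by auto
  show "summable (\<lambda>m::nat. if m = 0 then x else if m = 1 then y else 0)"
    by (rule summable_finite[of "{0,1}"]) auto
  show "(\<Sum>m::nat. if m = 0 then x else if m = 1 then y else 0) = x + y"
    by (subst suminf_finite[of "{0,1}"]) auto
qed

lemma zero_in_l2: "in_l2 (\<lambda>_. 0)" by (simp add: in_l2_def)
lemma l2norm_zero: "l2norm (\<lambda>_. 0) = 0" by (simp add: l2norm_def)

lemma Y_zero: "(\<lambda>n. 0) \<in> Yspace" "Ynorm (\<lambda>n. 0) = 0"
proof -
  have r: "Y_rep (\<lambda>n. 0) (\<lambda>k n. 0) (\<lambda>k n. 0)"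
    by (simp add: Y_rep_def zero_in_l2 l2norm_zero dconv_def)
  thus "(\<lambda>n. 0) \<in> Yspace" by (auto simp: Yspace_def)
  hence "0 \<le> Ynorm (\<lambda>n. 0)" by (rule Ynorm_nonneg)
  thus "Ynorm (\<lambda>n. 0) = 0" using Ynorm_le[OF r] by (simp add: l2norm_zero)
qed

lemma Y_add:
  assumes "c \<in> Yspace" "d \<in> Yspace"
  shows "(\<lambda>n. c n + d n) \<in> Yspace" "Ynorm (\<lambda>n. c n + d n) \<le> Ynorm c + Ynorm d"
proof -
  define D where "D = (\<lambda>m::nat. if m = 0 then c else if m = 1 then d else (\<lambda>n. 0))"
  have DY: "\<And>m. D m \<in> Yspace" using assms Y_zero by (simp add: D_def)
  have yn: "(\<lambda>m. Ynorm (D m)) = (\<lambda>m. if m = 0 then Ynorm c else if m = 1 then Ynorm d else 0)"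
    by (auto simp: D_def Y_zero)
  have sn: "summable (\<lambda>m. Ynorm (D m))" unfolding yn by (rule sum2_suminf)
  have dn: "(\<lambda>m. D m n) = (\<lambda>m. if m = 0 then c n else if m = 1 then d n else 0)" for n
    by (auto simp: D_def)
  have eq: "(\<lambda>n. \<Sum>m. D m n) = (\<lambda>n. c n + d n)" unfolding dn sum2_suminf by simp
  note Y_series[OF DY sn]
  thus "(\<lambda>n. c n + d n) \<in> Yspace" "Ynorm (\<lambda>n. c n + d n) \<le> Ynorm c + Ynorm d"
    unfolding eq yn sum2_suminf by auto
qed

lemma l2_scale:
  assumes "in_l2 a"
  shows "in_l2 (\<lambda>i. z * a i)" "l2norm (\<lambda>i. z * a i) = cmod z * l2norm a"
proof -
  have e: "(\<lambda>n. (cmod (z * a n))\<^sup>2) = (\<lambda>n. (cmod z)\<^sup>2 * (cmod (a n))\<^sup>2)"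
    by (simp add: norm_mult power_mult_distrib)
  show "in_l2 (\<lambda>i. z * a i)" using assms unfolding in_l2_def e by (auto intro: summable_mult)
  have "(\<Sum>n. (cmod (z * a n))\<^sup>2) = (cmod z)\<^sup>2 * (\<Sum>n. (cmod (a n))\<^sup>2)"
    unfolding e using assms by (intro suminf_mult) (simp add: in_l2_def)
  thus "l2norm (\<lambda>i. z * a i) = cmod z * l2norm a"
    by (simp add: l2norm_def real_sqrt_mult)
qed

lemma dconv_scale: "dconv (\<lambda>i. z * a i) b n = z * dconv a b n"
  by (simp add: dconv_def sum_distrib_left mult.assoc)

lemma Y_scale:
  assumes "c \<in> Yspace"
  shows "(\<lambda>n. of_real r * c n) \<in> Yspace" "Ynorm (\<lambda>n. of_real r * c n) \<le> \<bar>r\<bar> * Ynorm c"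
proof -
  have step: "Y_rep (\<lambda>n. of_real r * c n) (\<lambda>k i. of_real r * a k i) b \<and>
      (\<Sum>k. cost (\<lambda>k i. of_real r * a k i) b k) = \<bar>r\<bar> * (\<Sum>k. cost a b k)" if rep: "Y_rep c a b" for a b
  proof -
    have l2: "\<And>k. in_l2 (a k) \<and> in_l2 (b k)" and s: "summable (cost a b)"
      and sm: "\<And>n. (\<lambda>k. dconv (a k) (b k) n) sums c n" using rep by (auto simp: Y_rep_def)
    have ce: "cost (\<lambda>k i. of_real r * a k i) b = (\<lambda>k. \<bar>r\<bar> * cost a b k)"
      using l2 l2_scale(2) by (auto simp: fun_eq_iff)
    show ?thesis unfolding Y_rep_def ce
      using l2 l2_scale(1) s sm sums_mult[OF sm, of "of_real r"]
      by (auto simp: dconv_scale suminf_mult summable_mult)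
  qed
  obtain a b where r0: "Y_rep c a b" using assms by (auto simp: Yspace_def)
  thus mem: "(\<lambda>n. of_real r * c n) \<in> Yspace" using step by (auto simp: Yspace_def)
  have "Ynorm (\<lambda>n. of_real r * c n) \<le> \<bar>r\<bar> * Ynorm c + e" if e: "e > 0" for e
  proof -
    have "e / (\<bar>r\<bar> + 1) > 0" using e by simp
    then obtain a b where rep: "Y_rep c a b" and lt: "(\<Sum>k. cost a b k) < Ynorm c + e / (\<bar>r\<bar> + 1)"
      using Ynorm_approx[OF assms] by blast
    have "Ynorm (\<lambda>n. of_real r * c n) \<le> \<bar>r\<bar> * (\<Sum>k. cost a b k)"
      using step[OF rep] Ynorm_le[of "\<lambda>n. of_real r * c n" "\<lambda>k i. of_real r * a k i" b] by simp
    also have "\<dots> \<le> \<bar>r\<bar> * (Ynorm c + e / (\<bar>r\<bar> + 1))"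
      using lt by (intro mult_left_mono) auto
    also have "\<dots> \<le> \<bar>r\<bar> * Ynorm c + e"
    proof -
      have "\<bar>r\<bar> * (e / (\<bar>r\<bar> + 1)) \<le> e" using e by (simp add: field_simps)
      thus ?thesis by (simp add: distrib_left)
    qed
    finally show ?thesis .
  qed
  thus "Ynorm (\<lambda>n. of_real r * c n) \<le> \<bar>r\<bar> * Ynorm c" by (rule field_le_epsilon)
qed

lemma Y_neg:
  assumes "c \<in> Yspace"
  shows "(\<lambda>n. - c n) \<in> Yspace" "Ynorm (\<lambda>n. - c n) = Ynorm c"
proof -
  have e: "(\<lambda>n. - c n) = (\<lambda>n. of_real (-1) * c n)" by simp
  show m: "(\<lambda>n. - c n) \<in> Yspace" unfolding e by (rule Y_scale[OF assms])
  have "Ynorm (\<lambda>n. - c n) \<le> Ynorm c" unfolding e using Y_scale(2)[OF assms, of "-1"] by simp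
  moreover have "Ynorm c \<le> Ynorm (\<lambda>n. - c n)"
    using Y_scale(2)[OF m, of "-1"] by simp
  ultimately show "Ynorm (\<lambda>n. - c n) = Ynorm c" by simp
qed

lemma Y_diff:
  assumes "c \<in> Yspace" "d \<in> Yspace"
  shows "(\<lambda>n. c n - d n) \<in> Yspace" "Ynorm (\<lambda>n. c n - d n) \<le> Ynorm c + Ynorm d"
proof -
  have e: "(\<lambda>n. c n - d n) = (\<lambda>n. c n + - d n)" by simp
  show "(\<lambda>n. c n - d n) \<in> Yspace" unfolding e using Y_add(1)[OF assms(1) Y_neg(1)[OF assms(2)]] .
  show "Ynorm (\<lambda>n. c n - d n) \<le> Ynorm c + Ynorm d" unfolding e
    using Y_add(2)[OF assms(1) Y_neg(1)[OF assms(2)]] Y_neg(2)[OF assms(2)] by simp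
qed

lemma Y_diff_sym:
  assumes "c \<in> Yspace" "d \<in> Yspace"
  shows "Ynorm (\<lambda>n. c n - d n) = Ynorm (\<lambda>n. d n - c n)"
proof -
  have "(\<lambda>n. d n - c n) = (\<lambda>n. - (c n - d n))" by simp
  thus ?thesis using Y_neg(2)[OF Y_diff(1)[OF assms]] by simp
qed


lemma X_rep_Y:
  assumes "X_rep c N a b"
  shows "Y_rep c (\<lambda>k. if k < N then a k else (\<lambda>_. 0)) (\<lambda>k. if k < N then b k else (\<lambda>_. 0))"
    "(\<Sum>k. cost (\<lambda>k. if k < N then a k else (\<lambda>_. 0)) (\<lambda>k. if k < N then b k else (\<lambda>_. 0)) k)
       = (\<Sum>k<N. cost a b k)"
proof -
  define A where "A = (\<lambda>k. if k < N then a k else (\<lambda>_. 0::complex))"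
  define B where "B = (\<lambda>k. if k < N then b k else (\<lambda>_. 0::complex))"
  have fs: "\<And>k. k < N \<Longrightarrow> fin_supp (a k) \<and> fin_supp (b k)" and c: "c = (\<lambda>n. \<Sum>k<N. dconv (a k) (b k) n)"
    using assms by (auto simp: X_rep_def)
  have l2: "in_l2 (A k) \<and> in_l2 (B k)" for k
    using fs fin_supp_in_l2 zero_in_l2 by (auto simp: A_def B_def)
  have cz: "\<And>k. k \<notin> {..<N} \<Longrightarrow> cost A B k = 0" by (simp add: A_def B_def l2norm_zero)
  have cs: "cost A B sums (\<Sum>k<N. cost a b k)"
  proof -
    have "cost A B sums (\<Sum>k<N. cost A B k)" by (rule sums_finite[OF _ cz]) simp
    moreover have "(\<Sum>k<N. cost A B k) = (\<Sum>k<N. cost a b k)" by (simp add: A_def B_def)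
    ultimately show ?thesis by simp
  qed
  have dz: "\<And>k. k \<notin> {..<N} \<Longrightarrow> dconv (A k) (B k) n = 0" for n by (simp add: A_def B_def dconv_def)
  have ds: "(\<lambda>k. dconv (A k) (B k) n) sums c n" for n
  proof -
    have "(\<lambda>k. dconv (A k) (B k) n) sums (\<Sum>k<N. dconv (A k) (B k) n)" by (rule sums_finite[OF _ dz]) simp
    moreover have "(\<Sum>k<N. dconv (A k) (B k) n) = c n" by (simp add: A_def B_def c)
    ultimately show ?thesis by simp
  qed
  show "Y_rep c A B" unfolding Y_rep_def using l2 cs ds sums_summable by blast
  show "(\<Sum>k. cost A B k) = (\<Sum>k<N. cost a b k)" using cs by (simp add: sums_iff)
qed

lemma X_rep_cost_nonneg: "X_rep c N a b \<Longrightarrow> 0 \<le> (\<Sum>k<N. cost a b k)"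
  by (auto simp: X_rep_def intro!: sum_nonneg mult_nonneg_nonneg l2norm_nonneg fin_supp_in_l2)

lemma Xnorm_le: "X_rep c N a b \<Longrightarrow> Xnorm c \<le> (\<Sum>k<N. cost a b k)"
  unfolding Xnorm_def
  by (rule cInf_lower) (auto intro!: bdd_belowI[of _ 0] X_rep_cost_nonneg)

lemma X_in_Y:
  assumes "c \<in> Xspace"
  shows "c \<in> Yspace" "Ynorm c \<le> Xnorm c"
proof -
  obtain N a b where r: "X_rep c N a b" using assms by (auto simp: Xspace_def)
  thus "c \<in> Yspace" using X_rep_Y(1)[OF r] by (auto simp: Yspace_def)
  have "Ynorm c \<le> (\<Sum>k<N. cost a b k)" if "X_rep c N a b" for N a b
    using Ynorm_le[OF X_rep_Y(1)[OF that]] X_rep_Y(2)[OF that] by simp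
  thus "Ynorm c \<le> Xnorm c" unfolding Xnorm_def using r
    by (intro cInf_greatest) auto
qed

definition finsupp :: "(nat \<Rightarrow> complex) \<Rightarrow> bool" where
  "finsupp c \<longleftrightarrow> c 0 = 0 \<and> (\<exists>L. \<forall>n\<ge>L. c n = 0)"

lemma dconv_zero_large:
  assumes "\<And>i. i \<ge> L \<Longrightarrow> a i = 0" "\<And>i. i \<ge> L \<Longrightarrow> b i = 0" "n \<ge> L * L"
  shows "dconv a b n = 0"
proof (cases "n = 0")
  case True thus ?thesis by (simp add: dconv_def)
next
  case False
  have z: "a k * cnj (b (n div k)) = 0" if "k dvd n" for k
  proof (rule ccontr)
    assume "a k * cnj (b (n div k)) \<noteq> 0"
    hence "k < L" "n div k < L" using assms(1,2) by (auto simp: not_le[symmetric])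
    hence "k * (n div k) < L * L" by (simp add: mult_strict_mono)
    moreover have "k * (n div k) = n" using that by simp
    ultimately show False using assms(3) by simp
  qed
  have "(\<Sum>k | k dvd n. a k * cnj (b (n div k))) = 0" by (rule sum.neutral) (use z in blast)
  thus ?thesis by (simp add: dconv_def)
qed

lemma X_finsupp:
  assumes "c \<in> Xspace" shows "finsupp c"
proof -
  obtain N a b where r: "X_rep c N a b" using assms by (auto simp: Xspace_def)
  have fs: "\<And>k. k < N \<Longrightarrow> fin_supp (a k) \<and> fin_supp (b k)" and c: "c = (\<lambda>n. \<Sum>k<N. dconv (a k) (b k) n)"
    using r by (auto simp: X_rep_def)
  define S where "S = (\<Union>k<N. {n. a k n \<noteq> 0} \<union> {n. b k n \<noteq> 0})"
  have "finite S" unfolding S_def using fs by (auto simp: fin_supp_def)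
  then obtain L where L: "S \<subseteq> {..<L}" using finite_nat_iff_bounded by blast
  have "\<forall>n\<ge>L*L. c n = 0"
  proof (intro allI impI)
    fix n assume n: "n \<ge> L * L"
    have "dconv (a k) (b k) n = 0" if "k < N" for k
      by (rule dconv_zero_large[OF _ _ n]) (use L that in \<open>auto simp: S_def not_less[symmetric]\<close>)
    thus "c n = 0" by (simp add: c)
  qed
  moreover have "c 0 = 0" by (simp add: c dconv_def)
  ultimately show ?thesis by (auto simp: finsupp_def)
qed

lemma l2norm_single: "l2norm (\<lambda>i. if i = k then z else 0) = cmod z"
proof -
  have "(\<Sum>n. (cmod (if n = k then z else 0))\<^sup>2) = (\<Sum>n\<in>{k}. (cmod (if n = k then z else 0))\<^sup>2)"
    by (rule suminf_finite) auto
  thus ?thesis by (simp add: l2norm_def)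
qed

lemma finsupp_X:
  assumes "d 0 = 0" "\<And>n. n \<ge> L \<Longrightarrow> d n = 0"
  shows "d \<in> Xspace" "Xnorm d \<le> (\<Sum>n<L. cmod (d n))"
proof -
  define a where "a = (\<lambda>k i. if i = k then d k else 0)"
  define b where "b = (\<lambda>k::nat. (\<lambda>i::nat. if i = 1 then 1 else (0::complex)))"
  have fa: "fin_supp (a k)" for k
    unfolding fin_supp_def a_def using assms(1) by (auto intro: finite_subset[of _ "{k}"])
  have fb: "fin_supp (b k)" for k
    unfolding fin_supp_def b_def by (auto intro: finite_subset[of _ "{1}"])
  have dc: "dconv (a k) (b k) n = (if n = k \<and> n \<noteq> 0 then d k else 0)" for k n
  proof (cases "n = 0")
    case True thus ?thesis by (simp add: dconv_def)
  next
    case False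
    have "dconv (a k) (b k) n = (\<Sum>i | i dvd n. a k i * cnj (b k (n div i)))"
      using False by (simp add: dconv_def)
    also have "\<dots> = (\<Sum>i | i dvd n. if i = k then d k * cnj (if n div k = 1 then 1 else 0) else 0)"
      by (rule sum.cong) (auto simp: a_def b_def)
    also have "\<dots> = (if k dvd n then d k * cnj (if n div k = 1 then 1 else 0) else 0)"
      using dvd_set_finite[of n] False by (subst sum.delta) simp_all
    also have "\<dots> = (if n = k then d k else 0)"
    proof -
      have "k dvd n \<and> n div k = 1 \<longleftrightarrow> n = k" using False
        by (metis div_self dvd_div_eq_0_iff dvd_mult_div_cancel dvd_refl mult.right_neutral zero_neq_one)
      thus ?thesis by auto
    qed
    finally show ?thesis using False by simp
  qed
  have rep: "X_rep d L a b"
    unfolding X_rep_def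
  proof (intro conjI allI impI)
    fix k assume "k < L" thus "fin_supp (a k)" "fin_supp (b k)" using fa fb by auto
  next
    have "(\<Sum>k<L. dconv (a k) (b k) n) = d n" for n
    proof -
      have "(\<Sum>k<L. dconv (a k) (b k) n) = (\<Sum>k<L. if k = n then (if n \<noteq> 0 then d n else 0) else 0)"
        using dc by (intro sum.cong) auto
      also have "\<dots> = (if n \<in> {..<L} then (if n \<noteq> 0 then d n else 0) else 0)"
        by simp
      also have "\<dots> = d n" using assms by auto
      finally show ?thesis .
    qed
    thus "d = (\<lambda>n. \<Sum>k<L. dconv (a k) (b k) n)" by auto
  qed
  thus "d \<in> Xspace" by (auto simp: Xspace_def)
  have "Xnorm d \<le> (\<Sum>k<L. cost a b k)" by (rule Xnorm_le[OF rep])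
  also have "\<dots> = (\<Sum>n<L. cmod (d n))"
  proof -
    have "l2norm (b k) = 1" for k using l2norm_single[of 1 1] by (simp add: b_def)
    moreover have "l2norm (a k) = cmod (d k)" for k using l2norm_single[of k "d k"] by (simp add: a_def)
    ultimately show ?thesis by simp
  qed
  finally show "Xnorm d \<le> (\<Sum>n<L. cmod (d n))" .
qed

lemma finsupp_Xspace: "finsupp d \<Longrightarrow> d \<in> Xspace"
  unfolding finsupp_def using finsupp_X(1) by blast

lemma Xspace_iff: "d \<in> Xspace \<longleftrightarrow> finsupp d"
  using finsupp_Xspace X_finsupp by blast

lemma finsupp_add: "finsupp c \<Longrightarrow> finsupp d \<Longrightarrow> finsupp (\<lambda>n. c n + d n)"
  unfolding finsupp_def by (metis add.right_neutral max.cobounded1 max.cobounded2 order_trans)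

lemma finsupp_diff: "finsupp c \<Longrightarrow> finsupp d \<Longrightarrow> finsupp (\<lambda>n. c n - d n)"
  unfolding finsupp_def by (metis diff_self max.cobounded1 max.cobounded2 order_trans)

lemma finsupp_scale: "finsupp c \<Longrightarrow> finsupp (\<lambda>n. z * c n)"
  unfolding finsupp_def by auto


lemma tail_sums:
  fixes f :: "nat \<Rightarrow> real"
  assumes "summable f"
  shows "(\<lambda>n. if n < M then 0 else f n) sums (suminf f - (\<Sum>i<M. f i))"
proof -
  have "(\<lambda>n. f n - (if n \<in> {..<M} then f n else 0)) sums (suminf f - (\<Sum>i\<in>{..<M}. f i))"
    by (rule sums_diff[OF summable_sums[OF assms] sums_If_finite_set]) simp
  moreover have "(\<lambda>n. f n - (if n \<in> {..<M} then f n else 0)) = (\<lambda>n. if n < M then 0 else f n)"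
    by auto
  ultimately show ?thesis by simp
qed

lemma tail_tendsto:
  fixes f :: "nat \<Rightarrow> real"
  assumes "summable f"
  shows "(\<lambda>M. \<Sum>n. if n < M then 0 else f n) \<longlonglongrightarrow> 0"
proof -
  have e: "(\<lambda>M. \<Sum>n. if n < M then 0 else f n) = (\<lambda>M. suminf f - (\<Sum>i<M. f i))"
    using tail_sums[OF assms] by (simp add: sums_iff fun_eq_iff)
  have "(\<lambda>M. suminf f - (\<Sum>i<M. f i)) \<longlonglongrightarrow> suminf f - suminf f"
    by (intro tendsto_intros summable_LIMSEQ assms)
  thus ?thesis unfolding e by simp
qed

definition trunc :: "nat \<Rightarrow> (nat \<Rightarrow> complex) \<Rightarrow> nat \<Rightarrow> complex" where
  "trunc M a = (\<lambda>i. if i < M then a i else 0)"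
definition tail :: "nat \<Rightarrow> (nat \<Rightarrow> complex) \<Rightarrow> nat \<Rightarrow> complex" where
  "tail M a = (\<lambda>i. if i < M then 0 else a i)"

lemma trunc_props:
  assumes "in_l2 a"
  shows "fin_supp (trunc M a)" "in_l2 (trunc M a)" "l2norm (trunc M a) \<le> l2norm a"
proof -
  show f: "fin_supp (trunc M a)" unfolding fin_supp_def trunc_def
    using assms by (auto simp: in_l2_def intro: finite_subset[of _ "{..<M}"])
  show "in_l2 (trunc M a)" using fin_supp_in_l2[OF f] .
  show "l2norm (trunc M a) \<le> l2norm a"
    by (rule in_l2_mono(2)[OF assms]) (use assms in \<open>auto simp: trunc_def in_l2_def\<close>)
qed

lemma tail_props:
  assumes "in_l2 a"
  shows "in_l2 (tail M a)" "l2norm (tail M a) \<le> l2norm a"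
  by (rule in_l2_mono[OF assms]; use assms in \<open>auto simp: tail_def in_l2_def\<close>)+

lemma tail_l2_tendsto:
  assumes "in_l2 a"
  shows "(\<lambda>M. l2norm (tail M a)) \<longlonglongrightarrow> 0"
proof -
  have s: "summable (\<lambda>n. (cmod (a n))\<^sup>2)" using assms by (simp add: in_l2_def)
  have e: "(\<lambda>n. (cmod (tail M a n))\<^sup>2) = (\<lambda>n. if n < M then 0 else (cmod (a n))\<^sup>2)" for M
    by (auto simp: tail_def)
  have "(\<lambda>M. sqrt (\<Sum>n. if n < M then 0 else (cmod (a n))\<^sup>2)) \<longlonglongrightarrow> sqrt 0"
    by (intro tendsto_intros tail_tendsto s)
  thus ?thesis unfolding l2norm_def e by simp
qed

lemma dconv_add_left: "dconv (\<lambda>i. a i + a' i) b n = dconv a b n + dconv a' b n"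
  by (simp add: dconv_def distrib_right sum.distrib)

lemma dconv_add_right: "dconv a (\<lambda>i. b i + b' i) n = dconv a b n + dconv a b' n"
  by (simp add: dconv_def distrib_left sum.distrib)

lemma trunc_tail: "a = (\<lambda>i. trunc M a i + tail M a i)"
  by (auto simp: trunc_def tail_def)

lemma Y_single:
  assumes "in_l2 a" "in_l2 b"
  shows "dconv a b \<in> Yspace" "Ynorm (dconv a b) \<le> l2norm a * l2norm b"
proof -
  define A where "A = (\<lambda>k::nat. if k = 0 then a else (\<lambda>_. 0))"
  define B where "B = (\<lambda>k::nat. if k = 0 then b else (\<lambda>_. 0))"
  have l2: "in_l2 (A k) \<and> in_l2 (B k)" for k using assms zero_in_l2 by (simp add: A_def B_def)
  have cz: "\<And>k. k \<notin> {0} \<Longrightarrow> cost A B k = 0" by (simp add: A_def B_def l2norm_zero)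
  have "cost A B sums (\<Sum>n\<in>{0}. cost A B n)" by (rule sums_finite) (use cz in auto)
  hence cs: "cost A B sums (l2norm a * l2norm b)" by (simp add: A_def B_def)
  have dz: "\<And>k. k \<notin> {0} \<Longrightarrow> dconv (A k) (B k) n = 0" for n by (simp add: A_def B_def dconv_def)
  have ds: "(\<lambda>k. dconv (A k) (B k) n) sums dconv a b n" for n
  proof -
    have "(\<lambda>k. dconv (A k) (B k) n) sums (\<Sum>k\<in>{0}. dconv (A k) (B k) n)" by (rule sums_finite) (use dz in auto)
    thus ?thesis by (simp add: A_def B_def)
  qed
  have rep: "Y_rep (dconv a b) A B" unfolding Y_rep_def using l2 cs ds sums_summable by blast
  thus "dconv a b \<in> Yspace" by (auto simp: Yspace_def)
  show "Ynorm (dconv a b) \<le> l2norm a * l2norm b" using Ynorm_le[OF rep] cs by (simp add: sums_iff)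
qed

lemma Y_dense:
  assumes y: "y \<in> Yspace" and e: "e > 0"
  shows "\<exists>c\<in>Xspace. Ynorm (\<lambda>n. y n - c n) < e"
proof -
  obtain a b where rep: "Y_rep y a b" using y by (auto simp: Yspace_def)
  have l2: "\<And>k. in_l2 (a k) \<and> in_l2 (b k)" and s: "summable (cost a b)"
    and sm: "\<And>n. (\<lambda>k. dconv (a k) (b k) n) sums y n" using rep by (auto simp: Y_rep_def)
  have cnn: "\<And>k. 0 \<le> cost a b k" using Y_rep_cost_nonneg[OF rep] .
  have "\<forall>\<^sub>F K in sequentially. (\<Sum>n. if n < K then 0 else cost a b n) < e/3"
    using tail_tendsto[OF s] e by (intro order_tendstoD) auto
  then obtain K where K: "(\<Sum>n. if n < K then 0 else cost a b n) < e/3"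
    by (auto simp: eventually_sequentially)
  define g where "g = (\<lambda>M. \<Sum>k<K. l2norm (tail M (a k)) * l2norm (b k) + l2norm (a k) * l2norm (tail M (b k)))"
  have "g \<longlonglongrightarrow> (\<Sum>k<K. 0 * l2norm (b k) + l2norm (a k) * 0)"
    unfolding g_def using l2 by (intro tendsto_intros tail_l2_tendsto) auto
  hence "\<forall>\<^sub>F M in sequentially. g M < e/3" using e by (intro order_tendstoD) auto
  then obtain M where M: "g M < e/3" by (auto simp: eventually_sequentially)
  define c where "c = (\<lambda>n. \<Sum>k<K. dconv (trunc M (a k)) (trunc M (b k)) n)"
  have "X_rep c K (\<lambda>k. trunc M (a k)) (\<lambda>k. trunc M (b k))"
    unfolding X_rep_def c_def using l2 trunc_props by auto
  hence cX: "c \<in> Xspace" by (auto simp: Xspace_def)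
  define d where "d = (\<lambda>m n. dconv (a m) (b m) n - (if m < K then dconv (trunc M (a m)) (trunc M (b m)) n else 0))"
  define \<beta> where "\<beta> = (\<lambda>m. if m < K then l2norm (tail M (a m)) * l2norm (b m) + l2norm (a m) * l2norm (tail M (b m))
     else cost a b m)"
  have dY: "d m \<in> Yspace \<and> Ynorm (d m) \<le> \<beta> m" for m
  proof (cases "m < K")
    case False
    hence "d m = dconv (a m) (b m)" by (simp add: d_def fun_eq_iff)
    thus ?thesis using Y_single[of "a m" "b m"] l2 False by (simp add: \<beta>_def)
  next
    case True
    have am: "in_l2 (a m)" and bm: "in_l2 (b m)" using l2 by auto
    have eq: "d m = (\<lambda>n. dconv (tail M (a m)) (b m) n + dconv (trunc M (a m)) (tail M (b m)) n)"
    proof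
      fix n
      have "dconv (a m) (b m) n = dconv (tail M (a m)) (b m) n + dconv (trunc M (a m)) (b m) n"
        by (subst trunc_tail[of "a m" M]) (simp add: dconv_add_left add.commute)
      moreover have "dconv (trunc M (a m)) (b m) n = dconv (trunc M (a m)) (trunc M (b m)) n + dconv (trunc M (a m)) (tail M (b m)) n"
        by (subst trunc_tail[of "b m" M]) (simp add: dconv_add_right)
      ultimately show "d m n = dconv (tail M (a m)) (b m) n + dconv (trunc M (a m)) (tail M (b m)) n"
        using True by (simp add: d_def)
    qed
    have y1: "dconv (tail M (a m)) (b m) \<in> Yspace" "Ynorm (dconv (tail M (a m)) (b m)) \<le> l2norm (tail M (a m)) * l2norm (b m)"
      using Y_single tail_props(1)[OF am] bm by auto
    have y2: "dconv (trunc M (a m)) (tail M (b m)) \<in> Yspace" "Ynorm (dconv (trunc M (a m)) (tail M (b m))) \<le> l2norm (trunc M (a m)) * l2norm (tail M (b m))"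
      using Y_single trunc_props(2)[OF am] tail_props(1)[OF bm] by auto
    have "l2norm (trunc M (a m)) * l2norm (tail M (b m)) \<le> l2norm (a m) * l2norm (tail M (b m))"
      by (intro mult_right_mono trunc_props(3)[OF am] l2norm_nonneg tail_props(1)[OF bm])
    thus ?thesis unfolding eq using Y_add[OF y1(1) y2(1)] y1(2) y2(2) True by (simp add: \<beta>_def)
  qed
  have \<beta>eq: "\<beta> = (\<lambda>m. (if m \<in> {..<K} then l2norm (tail M (a m)) * l2norm (b m) + l2norm (a m) * l2norm (tail M (b m)) else 0)
      + (if m < K then 0 else cost a b m))" by (auto simp: \<beta>_def fun_eq_iff)
  have \<beta>s: "\<beta> sums (g M + (suminf (cost a b) - (\<Sum>i<K. cost a b i)))"
    unfolding \<beta>eq g_def by (intro sums_add sums_If_finite_set tail_sums s) simp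
  have tK: "(\<Sum>n. if n < K then 0 else cost a b n) = suminf (cost a b) - (\<Sum>i<K. cost a b i)"
    using tail_sums[OF s] by (simp add: sums_iff)
  have Ynn: "0 \<le> Ynorm (d m)" for m using dY Ynorm_nonneg by blast
  have sY: "summable (\<lambda>m. Ynorm (d m))"
    by (rule summable_comparison_test[OF _ sums_summable[OF \<beta>s]]) (use dY Ynn in auto)
  note ser = Y_series[of d, OF _ sY] dY
  have sumd: "(\<lambda>n. \<Sum>m. d m n) = (\<lambda>n. y n - c n)"
  proof
    fix n
    have "(\<lambda>m. if m \<in> {..<K} then dconv (trunc M (a m)) (trunc M (b m)) n else 0) sums c n"
      unfolding c_def by (rule sums_If_finite_set) simp
    from sums_diff[OF sm this] show "(\<Sum>m. d m n) = y n - c n"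
      by (simp add: d_def sums_iff)
  qed
  have "Ynorm (\<lambda>n. y n - c n) \<le> (\<Sum>m. Ynorm (d m))" using ser sumd by auto
  also have "\<dots> \<le> suminf \<beta>" by (rule suminf_le[OF _ sY sums_summable[OF \<beta>s]]) (use dY in auto)
  also have "\<dots> < e"
  proof -
    have "suminf \<beta> = g M + (suminf (cost a b) - (\<Sum>i<K. cost a b i))" using \<beta>s by (simp add: sums_iff)
    thus ?thesis using M K tK e by linarith
  qed
  finally show ?thesis using cX by blast
qed


definition smooth :: "nat \<Rightarrow> nat \<Rightarrow> bool" where
  "smooth S n \<longleftrightarrow> n > 0 \<and> (\<forall>p. prime p \<and> p dvd n \<longrightarrow> p \<le> S)"

definition Om :: "nat \<Rightarrow> nat" where
  "Om n = size (prime_factorization n)"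

definition wt :: "nat \<Rightarrow> real \<Rightarrow> nat \<Rightarrow> real" where
  "wt S r n = (if smooth S n then r ^ Om n else 0)"

lemma smooth_mult: "smooth S (k * m) \<longleftrightarrow> smooth S k \<and> smooth S m"
  unfolding smooth_def by (auto simp: prime_dvd_mult_iff)

lemma Om_mult: "k \<noteq> 0 \<Longrightarrow> m \<noteq> 0 \<Longrightarrow> Om (k * m) = Om k + Om m"
  by (simp add: Om_def prime_factorization_mult)

lemma wt_mult: "wt S r (k * m) = wt S r k * wt S r m"
proof (cases "smooth S k \<and> smooth S m")
  case True
  hence "k \<noteq> 0" "m \<noteq> 0" by (auto simp: smooth_def)
  thus ?thesis using True by (simp add: wt_def smooth_mult Om_mult power_add)
next
  case False thus ?thesis by (auto simp: wt_def smooth_mult)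
qed

lemma wt_power: "wt S r (k ^ e) = wt S r k ^ e"
proof (induction e)
  case 0 thus ?case by (simp add: wt_def smooth_def Om_def)
next
  case (Suc e) thus ?case by (simp add: wt_mult)
qed

lemma wt_nonneg: "0 \<le> r \<Longrightarrow> 0 \<le> wt S r n" by (simp add: wt_def)
lemma wt_le1: "0 \<le> r \<Longrightarrow> r \<le> 1 \<Longrightarrow> wt S r n \<le> 1" by (simp add: wt_def power_le_one)

lemma smooth_small: "0 < n \<Longrightarrow> n \<le> S \<Longrightarrow> smooth S n"
  unfolding smooth_def by (meson dvd_imp_le order.trans)

lemma wt_small: "0 < n \<Longrightarrow> n \<le> S \<Longrightarrow> wt S r n = r ^ Om n"
  by (simp add: wt_def smooth_small)

lemma smooth0: "smooth 0 n \<longleftrightarrow> n = 1"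
proof
  assume s: "smooth 0 n"
  show "n = 1"
  proof (rule ccontr)
    assume "n \<noteq> 1"
    then obtain p where "prime p" "p dvd n" using prime_factor_nat by blast
    thus False using s prime_gt_0_nat[of p] by (auto simp: smooth_def)
  qed
qed (auto simp: smooth_def)

lemma geom_partial_le:
  fixes q :: real assumes "0 \<le> q" "q < 1"
  shows "(\<Sum>e<N. q ^ e) \<le> 1 / (1 - q)"
proof -
  have "(\<Sum>e<N. q ^ e) \<le> (\<Sum>e. q ^ e)"
    by (rule sum_le_suminf) (use assms in \<open>auto intro: summable_geometric\<close>)
  also have "\<dots> = 1 / (1 - q)" using assms by (intro suminf_geometric) auto
  finally show ?thesis .
qed

lemma wt_partial:
  assumes r: "0 \<le> r" "r < 1"
  shows "(\<Sum>n<N. (wt S r n)\<^sup>2) \<le> (1 / (1 - r\<^sup>2)) ^ S"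
proof (induction S arbitrary: N)
  case 0
  have "(\<Sum>n<N. (wt 0 r n)\<^sup>2) = (\<Sum>n<N. if n = 1 then 1 else 0)"
    by (rule sum.cong) (auto simp: wt_def smooth0 Om_def)
  also have "\<dots> \<le> 1" by simp
  finally show ?case by simp
next
  case (Suc S)
  have q: "0 \<le> r\<^sup>2" "r\<^sup>2 < 1" using r by (auto simp: power_less_one_iff abs_square_less_1)
  have Q1: "1 \<le> 1 / (1 - r\<^sup>2)" using q by (simp add: field_simps)
  have BS: "0 \<le> (1 / (1 - r\<^sup>2)) ^ S" using q by simp
  show ?case
  proof (cases "prime (Suc S)")
    case False
    have "smooth (Suc S) n = smooth S n" for n
      unfolding smooth_def using False by (auto simp: le_Suc_eq)
    hence "(\<Sum>n<N. (wt (Suc S) r n)\<^sup>2) = (\<Sum>n<N. (wt S r n)\<^sup>2)" by (simp add: wt_def)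
    also have "\<dots> \<le> (1 / (1 - r\<^sup>2)) ^ S" by (rule Suc.IH)
    also have "\<dots> \<le> (1 / (1 - r\<^sup>2)) ^ S * (1 / (1 - r\<^sup>2))" using mult_left_mono[OF Q1 BS] by simp
    finally show ?thesis by (simp add: mult.commute)
  next
    case True
    define p where "p = Suc S"
    have pp: "prime p" using True by (simp add: p_def)
    have p1: "p > 1" using prime_gt_1_nat[OF pp] .
    define f where "f = (\<lambda>n. (wt p r n)\<^sup>2)"
    define g where "g = (\<lambda>(e::nat, m::nat). p ^ e * m)"
    define I where "I = {..<N} \<times> {m. m < N \<and> smooth S m}"
    have smS: "smooth p m" if "smooth S m" for m using that by (auto simp: smooth_def p_def)
    have ndvd: "\<not> p dvd m" if "smooth S m" for m
      using that pp by (auto simp: smooth_def p_def)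
    have inj: "inj_on g I"
    proof (rule inj_onI)
      fix x y assume x: "x \<in> I" and y: "y \<in> I" and eq: "g x = g y"
      obtain e m e' m' where xy: "x = (e, m)" "y = (e', m')" by fastforce
      have sm: "smooth S m" "smooth S m'" using x y xy by (auto simp: I_def)
      hence nz: "m \<noteq> 0" "m' \<noteq> 0" by (auto simp: smooth_def)
      have m0: "multiplicity p m = 0" "multiplicity p m' = 0"
        using ndvd[OF sm(1)] ndvd[OF sm(2)] by (auto intro: not_dvd_imp_multiplicity_0)
      have pe0: "p ^ e \<noteq> 0" "p ^ e' \<noteq> 0" using p1 by auto
      have "multiplicity p (p ^ e * m) = e"
        using prime_elem_multiplicity_mult_distrib[of p "p ^ e" m] pe0 nz m0 pp by simp
      moreover have "multiplicity p (p ^ e' * m') = e'"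
        using prime_elem_multiplicity_mult_distrib[of p "p ^ e'" m'] pe0 nz m0 pp by simp
      moreover have "p ^ e * m = p ^ e' * m'" using eq xy by (simp add: g_def)
      ultimately have "e = e'" by metis
      moreover from this have "m = m'" using \<open>p ^ e * m = p ^ e' * m'\<close> p1 by simp
      ultimately show "x = y" using xy by simp
    qed
    have sub: "{n. n < N \<and> smooth p n} \<subseteq> g ` I"
    proof
      fix n assume "n \<in> {n. n < N \<and> smooth p n}"
      hence n: "n < N" "smooth p n" by auto
      hence n0: "n \<noteq> 0" by (auto simp: smooth_def)
      define e where "e = multiplicity p n"
      define m where "m = n div p ^ e"
      have dec: "n = p ^ e * m" unfolding m_def e_def using multiplicity_dvd[of p n] by simp
      have nd: "\<not> p dvd m" unfolding m_def e_def by (rule multiplicity_decompose) (use n0 p1 in auto)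
      have m0: "m \<noteq> 0" using dec n0 by auto
      have pe1: "1 \<le> p ^ e" using p1 by simp
      have "m \<le> p ^ e * m" using pe1 by simp
      hence "m \<le> n" using dec by simp
      hence mN: "m < N" using n by simp
      have "e < 2 ^ e" by (rule less_exp)
      also have "(2::nat) ^ e \<le> p ^ e" using p1 by (intro power_mono) auto
      finally have "e < p ^ e" .
      moreover have "p ^ e \<le> p ^ e * m" using m0 by simp
      hence "p ^ e \<le> n" using dec by simp
      ultimately have eN: "e < N" using n by simp
      have "smooth S m"
        unfolding smooth_def
      proof (intro conjI allI impI)
        show "0 < m" using m0 by simp
        fix q assume q: "prime q \<and> q dvd m"
        hence "q dvd n" using dec by simp
        hence "q \<le> p" using n q by (auto simp: smooth_def)
        moreover have "q \<noteq> p" using q nd by auto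
        ultimately show "q \<le> S" by (simp add: p_def)
      qed
      thus "n \<in> g ` I" using dec eN mN by (auto simp: I_def g_def intro!: image_eqI[of _ _ "(e, m)"])
    qed
    have fg: "f (g x) = (r\<^sup>2) ^ fst x * (wt S r (snd x))\<^sup>2" if "x \<in> I" for x
    proof -
      obtain e m where x: "x = (e, m)" by fastforce
      have sm: "smooth S m" using that x by (auto simp: I_def)
      have "smooth p p" unfolding smooth_def using p1 by (auto intro: dvd_imp_le)
      moreover have "Om p = 1" using pp by (simp add: Om_def prime_factorization_prime)
      ultimately have "wt p r p = r" by (simp add: wt_def)
      moreover have "wt p r m = wt S r m" using sm smS[OF sm] by (simp add: wt_def)
      ultimately have "wt p r (p ^ e * m) = r ^ e * wt S r m" by (simp add: wt_mult wt_power)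
      thus ?thesis by (simp add: f_def g_def x power_mult_distrib power_mult[symmetric] mult.commute)
    qed
    have "(\<Sum>n<N. f n) = (\<Sum>n\<in>{n. n < N \<and> smooth p n}. f n)"
      by (rule sum.mono_neutral_right) (auto simp: f_def wt_def)
    also have "\<dots> \<le> (\<Sum>n\<in>g ` I. f n)"
      by (rule sum_mono2) (use sub in \<open>auto simp: I_def f_def\<close>)
    also have "\<dots> = (\<Sum>x\<in>I. f (g x))" by (simp add: sum.reindex[OF inj])
    also have "\<dots> = (\<Sum>x\<in>I. (r\<^sup>2) ^ fst x * (wt S r (snd x))\<^sup>2)" by (rule sum.cong) (use fg in auto)
    also have "\<dots> \<le> (\<Sum>x\<in>{..<N} \<times> {..<N}. (r\<^sup>2) ^ fst x * (wt S r (snd x))\<^sup>2)"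
      by (rule sum_mono2) (auto simp: I_def)
    also have "\<dots> = (\<Sum>e<N. (r\<^sup>2) ^ e) * (\<Sum>m<N. (wt S r m)\<^sup>2)"
      by (simp add: sum_product sum.cartesian_product split_def)
    also have "\<dots> \<le> (1 / (1 - r\<^sup>2)) * (1 / (1 - r\<^sup>2)) ^ S"
      using q by (intro mult_mono geom_partial_le q Suc.IH) (auto intro: sum_nonneg)
    finally show ?thesis by (simp add: f_def p_def)
  qed
qed

lemma wt_summable:
  assumes "0 \<le> r" "r < 1"
  shows "summable (\<lambda>n. (wt S r n)\<^sup>2)"
  by (rule summableI_nonneg_bounded[OF _ wt_partial[OF assms]]) simp


lemma dconv_l1:
  "(\<Sum>n<N. cmod (dconv u v n)) \<le> (\<Sum>i<N. cmod (u i)) * (\<Sum>j<N. cmod (v j))"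
proof -
  define h where "h = (\<lambda>i j. cmod (u i) * cmod (v j))"
  define D where "D = (\<lambda>n::nat. {i. i dvd n})"
  define Sg where "Sg = Sigma {1..<N} D"
  define \<phi> where "\<phi> = (\<lambda>(n::nat, i::nat). (i, n div i))"
  have finD: "\<forall>n\<in>{1..<N}. finite (D n)" unfolding D_def using dvd_set_finite by auto
  have "(\<Sum>n<N. cmod (dconv u v n)) = (\<Sum>n\<in>{1..<N}. cmod (dconv u v n))"
    by (rule sum.mono_neutral_right) (auto simp: dconv_def)
  also have "\<dots> \<le> (\<Sum>n\<in>{1..<N}. \<Sum>i\<in>D n. h i (n div i))"
    by (rule sum_mono) (unfold D_def h_def, rule dconv_abs_le)
  also have "\<dots> = (\<Sum>x\<in>Sg. h (snd x) (fst x div snd x))"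
    unfolding Sg_def by (subst sum.Sigma[OF _ finD]) (simp_all add: split_def)
  also have "\<dots> = (\<Sum>y\<in>\<phi> ` Sg. h (fst y) (snd y))"
  proof -
    have "inj_on \<phi> Sg"
    proof (rule inj_onI)
      fix x y assume x: "x \<in> Sg" and y: "y \<in> Sg" and e: "\<phi> x = \<phi> y"
      obtain n i n' i' where xy: "x = (n, i)" "y = (n', i')" by fastforce
      have d: "i dvd n" "i' dvd n'" using x y xy by (auto simp: Sg_def D_def)
      have ii: "i = i'" "n div i = n' div i'" using e xy by (auto simp: \<phi>_def)
      have "n = i * (n div i)" using d by simp
      also have "\<dots> = i' * (n' div i')" using ii by simp
      also have "\<dots> = n'" using d by simp
      finally show "x = y" using xy ii by simp
    qed
    thus ?thesis by (simp add: sum.reindex \<phi>_def split_def)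
  qed
  also have "\<dots> \<le> (\<Sum>y\<in>{..<N} \<times> {..<N}. h (fst y) (snd y))"
  proof (rule sum_mono2)
    show "\<phi> ` Sg \<subseteq> {..<N} \<times> {..<N}"
    proof
      fix y assume "y \<in> \<phi> ` Sg"
      then obtain n i where ni: "n \<in> {1..<N}" "i dvd n" "y = (i, n div i)"
        unfolding Sg_def D_def \<phi>_def by auto
      have "i \<le> n" using ni dvd_imp_le by auto
      moreover have "n div i \<le> n" by simp
      ultimately show "y \<in> {..<N} \<times> {..<N}" using ni(1,3) by (auto simp del: div_le_dividend)
    qed
  qed (auto simp: h_def)
  also have "\<dots> = (\<Sum>i<N. cmod (u i)) * (\<Sum>j<N. cmod (v j))"
    by (simp add: h_def sum_product sum.cartesian_product split_def)
  finally show ?thesis .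
qed

lemma weighted_l1:
  fixes v :: "nat \<Rightarrow> real"
  assumes sv: "summable (\<lambda>i. (v i)\<^sup>2)" and a: "in_l2 a"
  shows "(\<Sum>i<N. cmod (of_real (v i) * a i)) \<le> sqrt (\<Sum>i. (v i)\<^sup>2) * l2norm a"
proof -
  have "(\<Sum>i<N. cmod (of_real (v i) * a i)) = (\<Sum>i<N. \<bar>v i\<bar> * \<bar>cmod (a i)\<bar>)"
    by (simp add: norm_mult)
  also have "\<dots> \<le> L2_set v {..<N} * L2_set (\<lambda>i. cmod (a i)) {..<N}"
    by (rule L2_set_mult_ineq)
  also have "\<dots> \<le> sqrt (\<Sum>i. (v i)\<^sup>2) * l2norm a"
  proof (rule mult_mono)
    show "L2_set v {..<N} \<le> sqrt (\<Sum>i. (v i)\<^sup>2)"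
      unfolding L2_set_def by (intro real_sqrt_le_mono sum_le_suminf sv) auto
    show "L2_set (\<lambda>i. cmod (a i)) {..<N} \<le> l2norm a" by (rule L2_le_l2norm[OF a]) simp
    show "0 \<le> sqrt (\<Sum>i. (v i)\<^sup>2)" using sv by (auto intro: suminf_nonneg)
  qed auto
  finally show ?thesis .
qed

definition Wt :: "(nat \<Rightarrow> real) \<Rightarrow> (nat \<Rightarrow> complex) \<Rightarrow> nat \<Rightarrow> complex" where
  "Wt w a = (\<lambda>i. of_real (w i) * a i)"

lemma Wt_props:
  assumes a: "in_l2 a" and w: "\<And>i. 0 \<le> w i" "\<And>i. w i \<le> 1"
  shows "in_l2 (Wt w a)" "l2norm (Wt w a) \<le> l2norm a"
proof -
  have "cmod (Wt w a i) \<le> cmod (a i)" for i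
    using w[of i] by (simp add: Wt_def norm_mult mult_left_le_one_le)
  thus "in_l2 (Wt w a)" "l2norm (Wt w a) \<le> l2norm a"
    using in_l2_mono[OF a] a by (auto simp: Wt_def in_l2_def)
qed

lemma dconv_Wt:
  assumes mult: "\<And>i j. w (i * j) = w i * w j"
  shows "dconv (Wt w a) (Wt w b) n = of_real (w n) * dconv a b n"
proof (cases "n = 0")
  case True thus ?thesis by (simp add: dconv_def)
next
  case False
  have "of_real (w k) * a k * cnj (of_real (w (n div k)) * b (n div k)) = of_real (w n) * (a k * cnj (b (n div k)))"
    if "k dvd n" for k
  proof -
    have "w n = w k * w (n div k)" using mult[of k "n div k"] that by simp
    thus ?thesis by simp
  qed
  hence "(\<Sum>k | k dvd n. of_real (w k) * a k * cnj (of_real (w (n div k)) * b (n div k)))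
      = (\<Sum>k | k dvd n. of_real (w n) * (a k * cnj (b (n div k))))"
    by (intro sum.cong) auto
  thus ?thesis using False by (simp add: dconv_def Wt_def sum_distrib_left)
qed

lemma l1_single:
  fixes w :: "nat \<Rightarrow> real"
  assumes sw: "summable (\<lambda>i. (w i)\<^sup>2)" and a: "in_l2 a" and b: "in_l2 b"
  shows "(\<Sum>n<N. cmod (dconv (Wt w a) (Wt w b) n)) \<le> (\<Sum>i. (w i)\<^sup>2) * (l2norm a * l2norm b)"
proof -
  have ss: "0 \<le> (\<Sum>i. (w i)\<^sup>2)" using sw by (intro suminf_nonneg) auto
  have "(\<Sum>n<N. cmod (dconv (Wt w a) (Wt w b) n)) \<le> (\<Sum>i<N. cmod (Wt w a i)) * (\<Sum>j<N. cmod (Wt w b j))"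
    by (rule dconv_l1)
  also have "\<dots> \<le> (sqrt (\<Sum>i. (w i)\<^sup>2) * l2norm a) * (sqrt (\<Sum>i. (w i)\<^sup>2) * l2norm b)"
    unfolding Wt_def
    using ss l2norm_nonneg[OF a] by (intro mult_mono weighted_l1 sw a b) (auto intro: sum_nonneg mult_nonneg_nonneg)
  also have "\<dots> = (\<Sum>i. (w i)\<^sup>2) * (l2norm a * l2norm b)" using ss by simp
  finally show ?thesis .
qed

lemma l1_trunc_err:
  fixes w :: "nat \<Rightarrow> real"
  assumes sw: "summable (\<lambda>i. (w i)\<^sup>2)" and a: "in_l2 a" and b: "in_l2 b"
    and w: "\<And>i. 0 \<le> w i" "\<And>i. w i \<le> 1"
  shows "(\<Sum>n<N. cmod (dconv (Wt w a) (Wt w b) n - dconv (trunc M (Wt w a)) (trunc M (Wt w b)) n))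
     \<le> 2 * sqrt (\<Sum>i. (w i)\<^sup>2) * sqrt (\<Sum>i. (if i < M then 0 else w i)\<^sup>2) * (l2norm a * l2norm b)"
proof -
  define v where "v = (\<lambda>i. if i < M then 0 else w i)"
  have sv: "summable (\<lambda>i. (v i)\<^sup>2)"
    by (rule summable_comparison_test[OF _ sw]) (auto simp: v_def)
  define W where "W = sqrt (\<Sum>i. (w i)\<^sup>2)"
  define V where "V = sqrt (\<Sum>i. (v i)\<^sup>2)"
  have W0: "0 \<le> W" unfolding W_def using sw by (auto intro: suminf_nonneg)
  have V0: "0 \<le> V" unfolding V_def using sv by (auto intro: suminf_nonneg)
  have na: "0 \<le> l2norm a" and nb: "0 \<le> l2norm b" using a b l2norm_nonneg by auto
  have tA: "tail M (Wt w a) = (\<lambda>i. of_real (v i) * a i)" by (auto simp: tail_def Wt_def v_def)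
  have tB: "tail M (Wt w b) = (\<lambda>i. of_real (v i) * b i)" by (auto simp: tail_def Wt_def v_def)
  have SA: "(\<Sum>i<N. cmod (Wt w a i)) \<le> W * l2norm a" unfolding W_def Wt_def by (rule weighted_l1[OF sw a])
  have SB: "(\<Sum>i<N. cmod (Wt w b i)) \<le> W * l2norm b" unfolding W_def Wt_def by (rule weighted_l1[OF sw b])
  have TA: "(\<Sum>i<N. cmod (tail M (Wt w a) i)) \<le> V * l2norm a" unfolding V_def tA by (rule weighted_l1[OF sv a])
  have TB: "(\<Sum>i<N. cmod (tail M (Wt w b) i)) \<le> V * l2norm b" unfolding V_def tB by (rule weighted_l1[OF sv b])
  have RA: "(\<Sum>i<N. cmod (trunc M (Wt w a) i)) \<le> W * l2norm a"
    by (rule order.trans[OF sum_mono SA]) (auto simp: trunc_def)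
  have eq: "dconv (Wt w a) (Wt w b) n - dconv (trunc M (Wt w a)) (trunc M (Wt w b)) n
      = dconv (tail M (Wt w a)) (Wt w b) n + dconv (trunc M (Wt w a)) (tail M (Wt w b)) n" for n
  proof -
    have "dconv (Wt w a) (Wt w b) n = dconv (tail M (Wt w a)) (Wt w b) n + dconv (trunc M (Wt w a)) (Wt w b) n"
      by (subst trunc_tail[of "Wt w a" M]) (simp add: dconv_add_left add.commute)
    moreover have "dconv (trunc M (Wt w a)) (Wt w b) n = dconv (trunc M (Wt w a)) (trunc M (Wt w b)) n + dconv (trunc M (Wt w a)) (tail M (Wt w b)) n"
      by (subst trunc_tail[of "Wt w b" M]) (simp add: dconv_add_right)
    ultimately show ?thesis by simp
  qed
  have "(\<Sum>n<N. cmod (dconv (Wt w a) (Wt w b) n - dconv (trunc M (Wt w a)) (trunc M (Wt w b)) n))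
      \<le> (\<Sum>n<N. cmod (dconv (tail M (Wt w a)) (Wt w b) n)) + (\<Sum>n<N. cmod (dconv (trunc M (Wt w a)) (tail M (Wt w b)) n))"
    unfolding eq by (simp add: sum.distrib[symmetric] sum_mono norm_triangle_ineq)
  also have "\<dots> \<le> (V * l2norm a) * (W * l2norm b) + (W * l2norm a) * (V * l2norm b)"
  proof (rule add_mono)
    show "(\<Sum>n<N. cmod (dconv (tail M (Wt w a)) (Wt w b) n)) \<le> (V * l2norm a) * (W * l2norm b)"
      by (rule order.trans[OF dconv_l1 mult_mono[OF TA SB]]) (use V0 na in \<open>auto intro: sum_nonneg\<close>)
    show "(\<Sum>n<N. cmod (dconv (trunc M (Wt w a)) (tail M (Wt w b)) n)) \<le> (W * l2norm a) * (V * l2norm b)"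
      by (rule order.trans[OF dconv_l1 mult_mono[OF RA TB]]) (use W0 na in \<open>auto intro: sum_nonneg\<close>)
  qed
  also have "\<dots> = 2 * W * V * (l2norm a * l2norm b)" by (simp add: algebra_simps)
  finally show ?thesis unfolding W_def V_def v_def .
qed


lemma X_le_Y:
  assumes tri: "\<And>c d. c \<in> Xspace \<Longrightarrow> d \<in> Xspace \<Longrightarrow> Xnorm (\<lambda>n. c n + d n) \<le> Xnorm c + Xnorm d"
    and cX: "c \<in> Xspace" and rep: "Y_rep c a b"
  shows "Xnorm c \<le> (\<Sum>k. cost a b k)"
proof -
  define C where "C = (\<Sum>k. cost a b k)"
  have l2: "\<And>k. in_l2 (a k) \<and> in_l2 (b k)" and s: "summable (cost a b)"
    and sm: "\<And>n. (\<lambda>k. dconv (a k) (b k) n) sums c n" using rep by (auto simp: Y_rep_def)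
  have cnn: "\<And>k. 0 \<le> cost a b k" using Y_rep_cost_nonneg[OF rep] .
  have C0: "0 \<le> C" unfolding C_def using Y_rep_sum_nonneg[OF rep] .
  have fc: "finsupp c" using X_finsupp[OF cX] .
  then obtain L0 where L0: "\<And>n. n \<ge> L0 \<Longrightarrow> c n = 0" and c0: "c 0 = 0" unfolding finsupp_def by blast
  have main: "Xnorm c \<le> C + 3 * e" if e: "e > 0" for e
  proof -
    define \<psi> where "\<psi> = (\<lambda>r::real. \<Sum>n<L0. cmod (c n) * (1 - r ^ Om n))"
    have lim: "(\<psi> \<longlongrightarrow> \<psi> 1) (at_left 1)" unfolding \<psi>_def by (intro tendsto_intros)
    have \<psi>1: "\<psi> 1 = 0" by (simp add: \<psi>_def)
    have ev: "eventually (\<lambda>r. \<psi> r < e \<and> r \<in> {0<..<1}) (at_left (1::real))"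
      using order_tendstoD(2)[OF lim, of e] e \<psi>1 eventually_at_left_real[of 0 "1::real"]
      by (auto intro: eventually_conj)
    obtain r where r: "\<psi> r < e" "0 < r" "r < 1"
      using eventually_happens'[OF _ ev] trivial_limit_at_left_real by auto
    define w where "w = wt L0 r"
    have w0: "\<And>i. 0 \<le> w i" and w1: "\<And>i. w i \<le> 1" using r by (auto simp: w_def wt_nonneg wt_le1)
    have wm: "\<And>i j. w (i * j) = w i * w j" by (simp add: w_def wt_mult)
    have sw: "summable (\<lambda>i. (w i)\<^sup>2)" unfolding w_def using r by (intro wt_summable) auto
    define W2 where "W2 = (\<Sum>i. (w i)\<^sup>2)"
    have W2nn: "0 \<le> W2" unfolding W2_def using sw by (auto intro: suminf_nonneg)
    define A where "A = (\<lambda>k. Wt w (a k))"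
    define B where "B = (\<lambda>k. Wt w (b k))"
    have Al2: "\<And>k. in_l2 (A k)" "\<And>k. l2norm (A k) \<le> l2norm (a k)"
      unfolding A_def using Wt_props[OF _ w0 w1] l2 by auto
    have Bl2: "\<And>k. in_l2 (B k)" "\<And>k. l2norm (B k) \<le> l2norm (b k)"
      unfolding B_def using Wt_props[OF _ w0 w1] l2 by auto
    define tl where "tl = (\<lambda>K. \<Sum>n. if n < K then 0 else cost a b n)"
    have "(\<lambda>K. W2 * tl K) \<longlonglongrightarrow> W2 * 0" unfolding tl_def by (intro tendsto_intros tail_tendsto s)
    hence "\<forall>\<^sub>F K in sequentially. W2 * tl K < e" using e by (intro order_tendstoD) auto
    then obtain K where K: "W2 * tl K < e" by (auto simp: eventually_sequentially)
    define TW where "TW = (\<lambda>M. \<Sum>i. (if i < M then 0 else w i)\<^sup>2)"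
    have TWe: "TW = (\<lambda>M. \<Sum>i. if i < M then 0 else (w i)\<^sup>2)"
    proof -
      have "(\<lambda>i. (if i < M then 0 else w i)\<^sup>2) = (\<lambda>i. if i < M then 0 else (w i)\<^sup>2)" for M :: nat
        by auto
      thus ?thesis unfolding TW_def by simp
    qed
    have "(\<lambda>M. 2 * sqrt W2 * sqrt (TW M) * C) \<longlonglongrightarrow> 2 * sqrt W2 * sqrt 0 * C"
      unfolding TWe by (intro tendsto_intros tail_tendsto sw)
    hence "\<forall>\<^sub>F M in sequentially. 2 * sqrt W2 * sqrt (TW M) * C < e" using e by (intro order_tendstoD) auto
    then obtain M where M: "2 * sqrt W2 * sqrt (TW M) * C < e" by (auto simp: eventually_sequentially)
    define F where "F = (\<lambda>n. \<Sum>k<K. dconv (trunc M (A k)) (trunc M (B k)) n)"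
    have Frep: "X_rep F K (\<lambda>k. trunc M (A k)) (\<lambda>k. trunc M (B k))"
      unfolding X_rep_def F_def using Al2 Bl2 trunc_props by auto
    hence FX: "F \<in> Xspace" by (auto simp: Xspace_def)
    have XF: "Xnorm F \<le> C"
    proof -
      have "Xnorm F \<le> (\<Sum>k<K. l2norm (trunc M (A k)) * l2norm (trunc M (B k)))"
        by (rule Xnorm_le[OF Frep])
      also have "\<dots> \<le> (\<Sum>k<K. cost a b k)"
      proof (rule sum_mono)
        fix k
        show "l2norm (trunc M (A k)) * l2norm (trunc M (B k)) \<le> cost a b k"
          using order.trans[OF trunc_props(3)[OF Al2(1)] Al2(2)] order.trans[OF trunc_props(3)[OF Bl2(1)] Bl2(2)]
            l2norm_nonneg trunc_props(2) Al2(1) Bl2(1) l2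
          by (intro mult_mono) auto
      qed
      also have "\<dots> \<le> C" unfolding C_def by (rule sum_le_suminf[OF s]) (use cnn in auto)
      finally show ?thesis .
    qed
    define Dc where "Dc = (\<lambda>n. of_real (w n) * c n)"
    define R where "R = (\<lambda>n. Dc n - F n)"
    define E where "E = (\<lambda>n. c n - Dc n)"
    have fF: "finsupp F" using X_finsupp[OF FX] .
    have fD: "finsupp Dc" using fc unfolding Dc_def finsupp_def by auto
    have RX: "R \<in> Xspace" unfolding R_def by (rule finsupp_Xspace[OF finsupp_diff[OF fD fF]])
    have EX: "E \<in> Xspace" unfolding E_def by (rule finsupp_Xspace[OF finsupp_diff[OF fc fD]])
    have RFX: "(\<lambda>n. R n + F n) \<in> Xspace" by (rule finsupp_Xspace[OF finsupp_add[OF X_finsupp[OF RX] fF]])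
    have ceq: "c = (\<lambda>n. E n + (R n + F n))" by (auto simp: E_def R_def)
    have "Xnorm c \<le> Xnorm E + Xnorm (\<lambda>n. R n + F n)"
      using tri[OF EX RFX] ceq by simp
    also have "\<dots> \<le> Xnorm E + (Xnorm R + Xnorm F)" using tri[OF RX FX] by simp
    finally have tot: "Xnorm c \<le> Xnorm E + (Xnorm R + Xnorm F)" .
    have XE: "Xnorm E < e"
    proof -
      have "Xnorm E \<le> (\<Sum>n<L0. cmod (E n))"
        by (rule finsupp_X(2)) (auto simp: E_def Dc_def c0 L0)
      also have "\<dots> = \<psi> r" unfolding \<psi>_def
      proof (rule sum.cong)
        fix n assume n: "n \<in> {..<L0}"
        show "cmod (E n) = cmod (c n) * (1 - r ^ Om n)"
        proof (cases "n = 0")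
          case True thus ?thesis by (simp add: E_def Dc_def c0)
        next
          case False
          hence wn: "w n = r ^ Om n" using n by (simp add: w_def wt_small)
          have "cmod (E n) = cmod (of_real (1 - w n) * c n)" by (simp add: E_def Dc_def algebra_simps)
          also have "\<dots> = \<bar>1 - w n\<bar> * cmod (c n)" by (simp only: norm_mult norm_of_real)
          finally have "cmod (E n) = \<bar>1 - w n\<bar> * cmod (c n)" .
          thus ?thesis using w1[of n] wn by (simp add: mult.commute)
        qed
      qed simp
      finally show ?thesis using r by simp
    qed
    define N where "N = max L0 (M * M)"
    define \<rho> where "\<rho> = (\<lambda>k n. dconv (A k) (B k) n - (if k < K then dconv (trunc M (A k)) (trunc M (B k)) n else 0))"
    define \<beta> where "\<beta> = (\<lambda>k. if k < K then 2 * sqrt W2 * sqrt (TW M) * cost a b k else W2 * cost a b k)"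
    have Rsum: "(\<lambda>k. \<rho> k n) sums R n" for n
    proof -
      have "(\<lambda>k. dconv (A k) (B k) n) sums Dc n"
        unfolding A_def B_def Dc_def dconv_Wt[OF wm] by (rule sums_mult[OF sm])
      moreover have "(\<lambda>k. if k \<in> {..<K} then dconv (trunc M (A k)) (trunc M (B k)) n else 0) sums F n"
        unfolding F_def by (rule sums_If_finite_set) simp
      ultimately show ?thesis using sums_diff unfolding \<rho>_def R_def by fastforce
    qed
    have h\<rho>: "(\<Sum>n<N. cmod (\<rho> k n)) \<le> \<beta> k" for k
    proof (cases "k < K")
      case True
      have "(\<Sum>n<N. cmod (\<rho> k n)) \<le> 2 * sqrt (\<Sum>i. (w i)\<^sup>2) * sqrt (\<Sum>i. (if i < M then 0 else w i)\<^sup>2) * (l2norm (a k) * l2norm (b k))"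
        unfolding \<rho>_def A_def B_def using True l2 by (simp add: l1_trunc_err[OF sw _ _ w0 w1])
      thus ?thesis using True by (simp add: \<beta>_def W2_def TW_def)
    next
      case False
      have "(\<Sum>n<N. cmod (\<rho> k n)) \<le> (\<Sum>i. (w i)\<^sup>2) * (l2norm (a k) * l2norm (b k))"
        unfolding \<rho>_def A_def B_def using False l2 by (simp add: l1_single[OF sw])
      thus ?thesis using False by (simp add: \<beta>_def W2_def)
    qed
    define \<gamma> where "\<gamma> = 2 * sqrt W2 * sqrt (TW M)"
    have "summable (\<lambda>i. if i < M then 0 else (w i)\<^sup>2)" using tail_sums[OF sw] sums_summable by blast
    hence "0 \<le> TW M" unfolding TWe by (intro suminf_nonneg) auto
    hence \<gamma>0: "0 \<le> \<gamma>" unfolding \<gamma>_def using W2nn by simp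
    have \<beta>eq: "\<beta> = (\<lambda>k. (if k \<in> {..<K} then \<gamma> * cost a b k else 0) + W2 * (if k < K then 0 else cost a b k))"
      by (auto simp: \<beta>_def \<gamma>_def fun_eq_iff)
    have \<beta>s: "\<beta> sums ((\<Sum>k<K. \<gamma> * cost a b k) + W2 * tl K)"
      unfolding \<beta>eq tl_def by (intro sums_add sums_If_finite_set sums_mult summable_sums tail_sums[OF s, THEN sums_summable]) simp
    have \<beta>sum: "suminf \<beta> < 2 * e"
    proof -
      have "(\<Sum>k<K. \<gamma> * cost a b k) = \<gamma> * (\<Sum>k<K. cost a b k)" by (simp add: sum_distrib_left)
      also have "\<dots> \<le> \<gamma> * C" unfolding C_def
        by (intro mult_left_mono \<gamma>0 sum_le_suminf[OF s]) (use cnn in auto)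
      finally have "(\<Sum>k<K. \<gamma> * cost a b k) < e" using M by (simp add: \<gamma>_def)
      thus ?thesis using \<beta>s K by (simp add: sums_iff)
    qed
    have \<rho>le: "cmod (\<rho> k n) \<le> \<beta> k" if "n < N" for k n
      using member_le_sum[of n "{..<N}" "\<lambda>n. cmod (\<rho> k n)"] that h\<rho>[of k] by auto
    have \<rho>s: "summable (\<lambda>k. cmod (\<rho> k n))" if "n < N" for n
      by (rule summable_comparison_test[OF _ sums_summable[OF \<beta>s]]) (use \<rho>le[OF that] in auto)
    have XR: "Xnorm R < 2 * e"
    proof -
      have "Xnorm R \<le> (\<Sum>n<N. cmod (R n))"
      proof (rule finsupp_X(2))
        show "R 0 = 0" by (simp add: R_def Dc_def c0 F_def dconv_def)
        fix n assume n: "N \<le> n"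
        have "Dc n = 0" using n L0 by (simp add: Dc_def N_def)
        moreover have "F n = 0" unfolding F_def
          by (rule sum.neutral, rule ballI, rule dconv_zero_large[of M]) (use n in \<open>auto simp: trunc_def N_def\<close>)
        ultimately show "R n = 0" by (simp add: R_def)
      qed
      also have "\<dots> \<le> (\<Sum>n<N. \<Sum>k. cmod (\<rho> k n))"
      proof (rule sum_mono)
        fix n assume "n \<in> {..<N}"
        hence ns: "summable (\<lambda>k. cmod (\<rho> k n))" using \<rho>s by auto
        have "R n = (\<Sum>k. \<rho> k n)" using Rsum by (simp add: sums_iff)
        thus "cmod (R n) \<le> (\<Sum>k. cmod (\<rho> k n))" using summable_norm[OF ns] by simp
      qed
      also have "\<dots> = (\<Sum>k. \<Sum>n<N. cmod (\<rho> k n))"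
        by (rule suminf_sum[symmetric]) (use \<rho>s in auto)
      also have "\<dots> \<le> suminf \<beta>"
      proof (rule suminf_le[OF h\<rho> _ sums_summable[OF \<beta>s]])
        show "summable (\<lambda>k. \<Sum>n<N. cmod (\<rho> k n))"
          by (rule summable_sum) (use \<rho>s in auto)
      qed
      finally show ?thesis using \<beta>sum by simp
    qed
    show ?thesis using tot XE XR XF by linarith
  qed
  have "Xnorm c \<le> C + e" if "e > 0" for e using main[of "e/3"] that by simp
  hence "Xnorm c \<le> C" by (rule field_le_epsilon)
  thus ?thesis by (simp add: C_def)
qed


lemma Cauchy_dominated:
  fixes f :: "nat \<Rightarrow> 'a::real_normed_vector" and g :: "nat \<Rightarrow> 'b::real_normed_vector"
  assumes "Cauchy g" "\<And>m m'. norm (f m - f m') \<le> norm (g m - g m')"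
  shows "Cauchy f"
proof (rule CauchyI)
  fix e :: real assume "0 < e"
  then obtain M where "\<forall>m\<ge>M. \<forall>n\<ge>M. norm (g m - g n) < e" using assms(1) Cauchy_iff by blast
  thus "\<exists>M. \<forall>m\<ge>M. \<forall>n\<ge>M. norm (f m - f n) < e" using assms(2) order.strict_trans1 by blast
qed

lemma Cauchy_from_bound:
  fixes f :: "nat \<Rightarrow> 'a::real_normed_vector"
  assumes "\<And>m m'. norm (f m - f m') \<le> g m + g m'" "g \<longlonglongrightarrow> 0"
  shows "Cauchy f"
proof (rule CauchyI)
  fix e :: real assume e: "0 < e"
  have "\<forall>\<^sub>F m in sequentially. g m < e/2" using assms(2) e by (intro order_tendstoD) auto
  then obtain M where M: "\<And>m. m \<ge> M \<Longrightarrow> g m < e/2" by (auto simp: eventually_sequentially)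
  show "\<exists>M. \<forall>m\<ge>M. \<forall>n\<ge>M. norm (f m - f n) < e"
  proof (intro exI allI impI)
    fix m n assume "m \<ge> M" "n \<ge> M"
    thus "norm (f m - f n) < e" using assms(1)[of m n] M[of m] M[of n] by linarith
  qed
qed

locale jctx =
  fixes j :: "(nat \<Rightarrow> complex) \<Rightarrow> 'b::banach"
  assumes j_add: "\<forall>c\<in>Xspace. \<forall>d\<in>Xspace. j (\<lambda>n. c n + d n) = j c + j d"
    and j_scale: "\<forall>c\<in>Xspace. \<forall>r::real. j (\<lambda>n. of_real r * c n) = r *\<^sub>R j c"
    and j_isom: "\<forall>c\<in>Xspace. norm (j c) = Xnorm c"
    and j_dense: "closure (j ` Xspace) = UNIV"
begin

lemma Xadd: "c \<in> Xspace \<Longrightarrow> d \<in> Xspace \<Longrightarrow> (\<lambda>n. c n + d n) \<in> Xspace"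
  by (simp add: Xspace_iff finsupp_add)
lemma Xdiff: "c \<in> Xspace \<Longrightarrow> d \<in> Xspace \<Longrightarrow> (\<lambda>n. c n - d n) \<in> Xspace"
  by (simp add: Xspace_iff finsupp_diff)
lemma Xscale: "c \<in> Xspace \<Longrightarrow> (\<lambda>n. z * c n) \<in> Xspace"
  by (simp add: Xspace_iff finsupp_scale)

lemma jneg: "c \<in> Xspace \<Longrightarrow> j (\<lambda>n. - c n) = - j c"
  using j_scale[rule_format, of c "-1"] by simp

lemma jdiff: "c \<in> Xspace \<Longrightarrow> d \<in> Xspace \<Longrightarrow> j (\<lambda>n. c n - d n) = j c - j d"
proof -
  assume c: "c \<in> Xspace" and d: "d \<in> Xspace"
  have nd: "(\<lambda>n. - d n) \<in> Xspace" using Xscale[OF d, of "-1"] by simp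
  have "j (\<lambda>n. c n - d n) = j (\<lambda>n. c n + - d n)" by simp
  also have "\<dots> = j c + j (\<lambda>n. - d n)" using j_add[rule_format, OF c nd] .
  finally show ?thesis using jneg[OF d] by simp
qed

lemma Xtri: "c \<in> Xspace \<Longrightarrow> d \<in> Xspace \<Longrightarrow> Xnorm (\<lambda>n. c n + d n) \<le> Xnorm c + Xnorm d"
proof -
  assume c: "c \<in> Xspace" and d: "d \<in> Xspace"
  have "Xnorm (\<lambda>n. c n + d n) = norm (j (\<lambda>n. c n + d n))" using j_isom Xadd[OF c d] by simp
  also have "\<dots> = norm (j c + j d)" using j_add c d by simp
  also have "\<dots> \<le> norm (j c) + norm (j d)" by (rule norm_triangle_ineq)
  also have "\<dots> = Xnorm c + Xnorm d" using j_isom c d by simp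
  finally show ?thesis .
qed

lemma XY: assumes "c \<in> Xspace" shows "Ynorm c = Xnorm c"
proof -
  have cY: "c \<in> Yspace" using X_in_Y[OF assms] by simp
  have "Xnorm c \<le> Ynorm c + e" if ep: "e > 0" for e
  proof -
    obtain a b where "Y_rep c a b" "(\<Sum>k. cost a b k) < Ynorm c + e"
      using Ynorm_approx[OF cY ep] by blast
    thus ?thesis using X_le_Y[OF Xtri assms, of a b] by linarith
  qed
  hence "Xnorm c \<le> Ynorm c" by (rule field_le_epsilon)
  thus ?thesis using X_in_Y(2)[OF assms] by simp
qed

lemma coord: "c \<in> Xspace \<Longrightarrow> d \<in> Xspace \<Longrightarrow> cmod (c n - d n) \<le> norm (j c - j d)"
proof -
  assume c: "c \<in> Xspace" and d: "d \<in> Xspace"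
  have cd: "(\<lambda>n. c n - d n) \<in> Xspace" by (rule Xdiff[OF c d])
  have "cmod (c n - d n) \<le> Ynorm (\<lambda>n. c n - d n)" using Y_coord[OF X_in_Y(1)[OF cd]] by simp
  also have "\<dots> \<le> Xnorm (\<lambda>n. c n - d n)" by (rule X_in_Y(2)[OF cd])
  also have "\<dots> = norm (j (\<lambda>n. c n - d n))" using j_isom[rule_format, OF cd] by simp
  also have "\<dots> = norm (j c - j d)" by (simp only: jdiff[OF c d])
  finally show ?thesis .
qed

definition T :: "'b \<Rightarrow> nat \<Rightarrow> nat \<Rightarrow> complex" where
  "T x = (SOME t. \<forall>m. t m \<in> Xspace \<and> norm (j (t m) - x) < (1/2::real) ^ m)"

lemma T_ex: "\<exists>t. \<forall>m. t m \<in> Xspace \<and> norm (j (t m) - x) < (1/2::real) ^ m"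
proof -
  have "\<forall>m. \<exists>c. c \<in> Xspace \<and> norm (j c - x) < (1/2::real) ^ m"
  proof
    fix m
    have "x \<in> closure (j ` Xspace)" using j_dense by simp
    hence ap: "\<forall>e>0. \<exists>y\<in>j ` Xspace. dist y x < e" by (simp only: closure_approachable)
    have "(1/2::real) ^ m > 0" by simp
    then obtain y where "y \<in> j ` Xspace" "dist y x < (1/2::real) ^ m" using ap by blast
    thus "\<exists>c. c \<in> Xspace \<and> norm (j c - x) < (1/2::real) ^ m" by (auto simp: dist_norm)
  qed
  thus ?thesis by (rule choice)
qed

lemma T_all: "\<forall>m. T x m \<in> Xspace \<and> norm (j (T x m) - x) < (1/2::real) ^ m"
  unfolding T_def by (rule someI_ex[OF T_ex[of x]])

lemma T_props: "T x m \<in> Xspace" "norm (j (T x m) - x) < (1/2::real) ^ m"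
  using T_all[of x] by blast+

lemma T_lim: "(\<lambda>m. j (T x m)) \<longlonglongrightarrow> x"
proof -
  have "(\<lambda>m. j (T x m) - x) \<longlonglongrightarrow> 0"
  proof (rule Lim_null_comparison[of _ "\<lambda>m. (1/2::real) ^ m"])
    show "\<forall>\<^sub>F m in sequentially. norm (j (T x m) - x) \<le> (1/2::real) ^ m"
      by (rule always_eventually, rule allI, rule less_imp_le, rule T_props(2))
    show "(\<lambda>m. (1/2::real) ^ m) \<longlonglongrightarrow> 0" by (rule LIMSEQ_power_zero) simp
  qed
  thus ?thesis by (rule LIM_zero_cancel)
qed

definition V :: "'b \<Rightarrow> nat \<Rightarrow> complex" where
  "V x = (\<lambda>n. lim (\<lambda>m. T x m n))"

lemma TV: "(\<lambda>m. T x m n) \<longlonglongrightarrow> V x n"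
proof -
  have "Cauchy (\<lambda>m. T x m n)"
    by (rule Cauchy_dominated[OF LIMSEQ_imp_Cauchy[OF T_lim[of x]]], rule coord, rule T_props, rule T_props)
  hence "convergent (\<lambda>m. T x m n)" by (simp add: Cauchy_convergent_iff)
  thus ?thesis by (simp add: V_def convergent_LIMSEQ_iff)
qed

lemma conv:
  assumes s: "\<And>m. s m \<in> Xspace" and lim: "(\<lambda>m. j (s m)) \<longlonglongrightarrow> x"
  shows "(\<lambda>m. s m n) \<longlonglongrightarrow> V x n"
proof -
  have "(\<lambda>m. norm (j (s m) - j (T x m))) \<longlonglongrightarrow> norm (x - x)"
    by (intro tendsto_intros lim T_lim)
  have z: "(\<lambda>m. s m n - T x m n) \<longlonglongrightarrow> 0"
  proof (rule Lim_null_comparison[of _ "\<lambda>m. norm (j (s m) - j (T x m))"])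
    show "\<forall>\<^sub>F m in sequentially. norm (s m n - T x m n) \<le> norm (j (s m) - j (T x m))"
      by (rule always_eventually, rule allI, rule coord, rule s, rule T_props)
  qed (use \<open>(\<lambda>m. norm (j (s m) - j (T x m))) \<longlonglongrightarrow> norm (x - x)\<close> in simp)
  have "(\<lambda>m. T x m n + (s m n - T x m n)) \<longlonglongrightarrow> V x n + 0" by (intro tendsto_intros TV z)
  thus ?thesis by simp
qed

lemma V_add: "V (x + y) = (\<lambda>n. V x n + V y n)"
proof
  fix n
  have s: "\<And>m. (\<lambda>n. T x m n + T y m n) \<in> Xspace" by (intro Xadd T_props)
  have "(\<lambda>m. j (\<lambda>n. T x m n + T y m n)) = (\<lambda>m. j (T x m) + j (T y m))"
    using j_add T_props(1) by auto
  hence "(\<lambda>m. j (\<lambda>n. T x m n + T y m n)) \<longlonglongrightarrow> x + y" by (simp add: tendsto_add T_lim)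
  from conv[OF s this] have "(\<lambda>m. T x m n + T y m n) \<longlonglongrightarrow> V (x + y) n" by simp
  moreover have "(\<lambda>m. T x m n + T y m n) \<longlonglongrightarrow> V x n + V y n" by (intro tendsto_add TV)
  ultimately show "V (x + y) n = V x n + V y n" by (rule LIMSEQ_unique)
qed

lemma V_scale: "V (r *\<^sub>R x) = (\<lambda>n. of_real r * V x n)"
proof
  fix n
  have s: "\<And>m. (\<lambda>n. of_real r * T x m n) \<in> Xspace" by (intro Xscale T_props)
  have "(\<lambda>m. j (\<lambda>n. of_real r * T x m n)) = (\<lambda>m. r *\<^sub>R j (T x m))"
    using j_scale T_props(1) by auto
  hence "(\<lambda>m. j (\<lambda>n. of_real r * T x m n)) \<longlonglongrightarrow> r *\<^sub>R x" by (simp add: tendsto_scaleR T_lim)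
  from conv[OF s this] have "(\<lambda>m. of_real r * T x m n) \<longlonglongrightarrow> V (r *\<^sub>R x) n" by simp
  moreover have "(\<lambda>m. of_real r * T x m n) \<longlonglongrightarrow> of_real r * V x n" by (intro tendsto_mult tendsto_const TV)
  ultimately show "V (r *\<^sub>R x) n = of_real r * V x n" by (rule LIMSEQ_unique)
qed

lemma V_j: "c \<in> Xspace \<Longrightarrow> V (j c) = c"
proof
  fix n assume c: "c \<in> Xspace"
  have "(\<lambda>m. c n) \<longlonglongrightarrow> V (j c) n" using conv[of "\<lambda>m. c" "j c" n] c by simp
  thus "V (j c) n = c n" using LIMSEQ_unique tendsto_const by blast
qed

lemma V_Y:
  shows "V x \<in> Yspace \<and> Ynorm (V x) = norm x"
proof -
  define t where "t = T x"
  have tX: "\<And>m. t m \<in> Xspace" and tb: "\<And>m. norm (j (t m) - x) < (1/2::real)^m"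
    using T_props by (auto simp: t_def)
  have tV: "\<And>n. (\<lambda>m. t m n) \<longlonglongrightarrow> V x n" using TV by (simp add: t_def)
  have step: "(\<lambda>n. V x n - t M n) \<in> Yspace \<and> Ynorm (\<lambda>n. V x n - t M n) \<le> 4 * (1/2::real)^M" for M
  proof -
    define d where "d = (\<lambda>m n. t (Suc (m + M)) n - t (m + M) n)"
    have dX: "d m \<in> Xspace" for m unfolding d_def by (intro Xdiff tX)
    have dY: "d m \<in> Yspace" for m using X_in_Y(1)[OF dX] .
    have db: "Ynorm (d m) \<le> 2 * (1/2::real)^M * (1/2)^m" for m
    proof -
      have "Ynorm (d m) = Xnorm (d m)" by (rule XY[OF dX])
      also have "\<dots> = norm (j (t (Suc (m + M))) - j (t (m + M)))"
        using j_isom[rule_format, OF dX] jdiff[OF tX tX] by (simp add: d_def)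
      also have "\<dots> \<le> norm (j (t (Suc (m + M))) - x) + norm (j (t (m + M)) - x)"
        using norm_triangle_ineq4[of "j (t (Suc (m + M))) - x" "j (t (m + M)) - x"] by simp
      also have "\<dots> \<le> (1/2)^(Suc (m + M)) + (1/2)^(m + M)" using tb[of "Suc (m + M)"] tb[of "m + M"] by linarith
      also have "\<dots> \<le> 2 * (1/2::real)^M * (1/2)^m" by (simp add: power_add)
      finally show ?thesis .
    qed
    have gs: "(\<lambda>m. 2 * (1/2::real)^M * (1/2)^m) sums (2 * (1/2)^M * 2)"
      using sums_mult[OF geometric_sums[of "1/2::real"], of "2 * (1/2)^M"] by simp
    have Ynn: "\<And>m. 0 \<le> Ynorm (d m)" using Ynorm_nonneg dY by blast
    have sY: "summable (\<lambda>m. Ynorm (d m))"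
      by (rule summable_comparison_test[OF _ sums_summable[OF gs]]) (use db Ynn in auto)
    have sumd: "(\<lambda>n. \<Sum>m. d m n) = (\<lambda>n. V x n - t M n)"
    proof
      fix n
      have "(\<lambda>m. t (m + M) n) \<longlonglongrightarrow> V x n" using LIMSEQ_ignore_initial_segment[OF tV] .
      from telescope_sums[OF this] show "(\<Sum>m. d m n) = V x n - t M n"
        by (simp add: d_def sums_iff)
    qed
    have "Ynorm (\<lambda>n. \<Sum>m. d m n) \<le> (\<Sum>m. Ynorm (d m))" using Y_series[OF dY sY] by blast
    also have "\<dots> \<le> (\<Sum>m. 2 * (1/2::real)^M * (1/2)^m)"
      by (rule suminf_le[OF db sY sums_summable[OF gs]])
    also have "\<dots> = 4 * (1/2)^M" using gs by (simp add: sums_iff)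
    finally show ?thesis using Y_series[OF dY sY] sumd by auto
  qed
  have tY: "\<And>m. t m \<in> Yspace" using X_in_Y(1)[OF tX] .
  have VY: "V x \<in> Yspace"
  proof -
    have "(\<lambda>n. (V x n - t 0 n) + t 0 n) \<in> Yspace" using Y_add(1)[OF conjunct1[OF step] tY] .
    thus ?thesis by simp
  qed
  have tn: "Ynorm (t M) = norm (j (t M))" for M using XY[OF tX] j_isom[rule_format, OF tX] by simp
  have up: "Ynorm (V x) \<le> norm x + 5 * (1/2::real)^M" for M
  proof -
    have "Ynorm (V x) = Ynorm (\<lambda>n. (V x n - t M n) + t M n)" by simp
    also have "\<dots> \<le> Ynorm (\<lambda>n. V x n - t M n) + Ynorm (t M)" using Y_add(2)[OF conjunct1[OF step] tY] .
    also have "\<dots> \<le> 4 * (1/2)^M + (norm x + (1/2)^M)"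
    proof (rule add_mono)
      show "Ynorm (\<lambda>n. V x n - t M n) \<le> 4 * (1/2)^M" using step by blast
      have "norm (j (t M)) \<le> norm x + norm (j (t M) - x)" by (rule norm_triangle_sub)
      thus "Ynorm (t M) \<le> norm x + (1/2)^M" using tb[of M] tn by simp
    qed
    finally show ?thesis by simp
  qed
  have lo: "norm x \<le> Ynorm (V x) + 5 * (1/2::real)^M" for M
  proof -
    have "norm x \<le> norm (j (t M)) + norm (j (t M) - x)"
      by (metis norm_minus_commute norm_triangle_sub)
    also have "\<dots> \<le> Ynorm (t M) + (1/2)^M" using tb[of M] tn by simp
    also have "Ynorm (t M) = Ynorm (\<lambda>n. V x n + (t M n - V x n))" by simp
    also have "\<dots> \<le> Ynorm (V x) + Ynorm (\<lambda>n. t M n - V x n)"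
      using Y_add(2)[OF VY Y_diff(1)[OF tY VY]] .
    also have "Ynorm (\<lambda>n. t M n - V x n) = Ynorm (\<lambda>n. V x n - t M n)" by (rule Y_diff_sym[OF tY VY])
    also have "\<dots> \<le> 4 * (1/2)^M" using step by blast
    finally show ?thesis by simp
  qed
  have small: "\<exists>M. 5 * (1/2::real)^M < e" if ep: "e > 0" for e
  proof -
    have "e/5 > 0" using ep by simp
    then obtain M where "(1/2::real)^M < e/5" using real_arch_pow_inv[of "e/5" "1/2"] by auto
    thus ?thesis by (intro exI[of _ M]) simp
  qed
  have "Ynorm (V x) \<le> norm x + e" if ep: "e > 0" for e
  proof -
    obtain M where "5 * (1/2::real)^M < e" using small[OF ep] by blast
    thus ?thesis using up[of M] by linarith
  qed
  hence a1: "Ynorm (V x) \<le> norm x" by (rule field_le_epsilon)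
  have "norm x \<le> Ynorm (V x) + e" if ep: "e > 0" for e
  proof -
    obtain M where "5 * (1/2::real)^M < e" using small[OF ep] by blast
    thus ?thesis using lo[of M] by linarith
  qed
  hence a2: "norm x \<le> Ynorm (V x)" by (rule field_le_epsilon)
  show ?thesis using VY a1 a2 by simp
qed

lemma V_inj: "V x = V y \<Longrightarrow> x = y"
proof -
  assume e: "V x = V y"
  have "V (x + (-1) *\<^sub>R y) = (\<lambda>n. V x n + of_real (-1) * V y n)" by (subst V_add, subst V_scale, simp)
  also have "\<dots> = (\<lambda>n. 0)" using e by simp
  finally have "Ynorm (V (x + (-1) *\<^sub>R y)) = 0" using Y_zero by simp
  hence "norm (x + (-1) *\<^sub>R y) = 0" using V_Y[of "x + (-1) *\<^sub>R y"] by simp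
  thus "x = y" by simp
qed

lemma V_surj:
  assumes y: "y \<in> Yspace" shows "\<exists>x. V x = y"
proof -
  have "\<forall>m. \<exists>c. c \<in> Xspace \<and> Ynorm (\<lambda>n. y n - c n) < (1/2::real)^m"
  proof
    fix m
    have "(1/2::real)^m > 0" by simp
    from Y_dense[OF y this] show "\<exists>c. c \<in> Xspace \<and> Ynorm (\<lambda>n. y n - c n) < (1/2::real)^m" by blast
  qed
  from choice[OF this] obtain c where c0: "\<forall>m. c m \<in> Xspace \<and> Ynorm (\<lambda>n. y n - c m n) < (1/2::real)^m"
    by blast
  have c: "\<And>m. c m \<in> Xspace" "\<And>m. Ynorm (\<lambda>n. y n - c m n) < (1/2::real)^m" using c0 by auto
  have cY: "\<And>m. c m \<in> Yspace" using X_in_Y(1)[OF c(1)] .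
  have "Cauchy (\<lambda>m. j (c m))"
  proof (rule Cauchy_from_bound[of _ "\<lambda>m. (1/2::real)^m"])
    fix m m'
    have "norm (j (c m) - j (c m')) = Xnorm (\<lambda>n. c m n - c m' n)"
      using jdiff[OF c(1) c(1)] j_isom[rule_format, OF Xdiff[OF c(1) c(1)]] by simp
    also have "\<dots> = Ynorm (\<lambda>n. c m n - c m' n)" using XY[OF Xdiff[OF c(1) c(1)]] by simp
    also have "\<dots> = Ynorm (\<lambda>n. (c m n - y n) + (y n - c m' n))" by simp
    also have "\<dots> \<le> Ynorm (\<lambda>n. c m n - y n) + Ynorm (\<lambda>n. y n - c m' n)"
      using Y_add(2)[OF Y_diff(1)[OF cY y] Y_diff(1)[OF y cY]] .
    also have "Ynorm (\<lambda>n. c m n - y n) = Ynorm (\<lambda>n. y n - c m n)" by (rule Y_diff_sym[OF cY y])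
    finally show "norm (j (c m) - j (c m')) \<le> (1/2)^m + (1/2)^m'" using c(2)[of m] c(2)[of m'] by linarith
  qed (rule LIMSEQ_power_zero, simp)
  then obtain x where lim: "(\<lambda>m. j (c m)) \<longlonglongrightarrow> x" using Cauchy_convergent_iff convergent_def by blast
  have "V x = y"
  proof
    fix n
    have l1: "(\<lambda>m. c m n) \<longlonglongrightarrow> V x n" by (rule conv[OF c(1) lim])
    have "(\<lambda>m. c m n - y n) \<longlonglongrightarrow> 0"
    proof (rule Lim_null_comparison[of _ "\<lambda>m. (1/2::real)^m"])
      show "\<forall>\<^sub>F m in sequentially. norm (c m n - y n) \<le> (1/2::real)^m"
      proof (rule always_eventually, rule allI)
        fix m
        have "norm (c m n - y n) \<le> Ynorm (\<lambda>n. c m n - y n)" using Y_coord[OF Y_diff(1)[OF cY y]] by simp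
        also have "\<dots> = Ynorm (\<lambda>n. y n - c m n)" by (rule Y_diff_sym[OF cY y])
        finally show "norm (c m n - y n) \<le> (1/2::real)^m" using c(2)[of m] by simp
      qed
    qed (rule LIMSEQ_power_zero, simp)
    hence "(\<lambda>m. (c m n - y n) + y n) \<longlonglongrightarrow> 0 + y n" by (intro tendsto_intros)
    hence "(\<lambda>m. c m n) \<longlonglongrightarrow> y n" by simp
    thus "V x n = y n" using l1 LIMSEQ_unique by blast
  qed
  thus ?thesis by blast
qed

end

theorem proposition9:
  fixes j :: "(nat \<Rightarrow> complex) \<Rightarrow> 'b::banach"
  assumes j_add: "\<forall>c\<in>Xspace. \<forall>d\<in>Xspace. j (\<lambda>n. c n + d n) = j c + j d"
    and j_scale: "\<forall>c\<in>Xspace. \<forall>r::real. j (\<lambda>n. of_real r * c n) = r *\<^sub>R j c"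
    and j_isom: "\<forall>c\<in>Xspace. norm (j c) = Xnorm c"
    and j_dense: "closure (j ` Xspace) = UNIV"
  shows "\<exists>V :: 'b \<Rightarrow> (nat \<Rightarrow> complex).
           (\<forall>x y. V (x + y) = (\<lambda>n. V x n + V y n))
         \<and> (\<forall>r x. V (r *\<^sub>R x) = (\<lambda>n. of_real r * V x n))
         \<and> bij_betw V UNIV Yspace
         \<and> (\<forall>x. Ynorm (V x) = norm x)
         \<and> (\<forall>c\<in>Xspace. V (j c) = c)"
proof -
  interpret jctx j by unfold_locales (fact assms)+
  have "bij_betw V UNIV Yspace"
    unfolding bij_betw_def
  proof
    show "inj_on V UNIV" by (auto intro: inj_onI V_inj)
    show "range V = Yspace"
    proof (intro equalityI subsetI)
      fix z assume "z \<in> range V"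
      then obtain x where "z = V x" by blast
      thus "z \<in> Yspace" using V_Y[of x] by simp
    next
      fix z assume "z \<in> Yspace"
      then obtain x where "V x = z" using V_surj by blast
      thus "z \<in> range V" by blast
    qed
  qed
  hence "(\<forall>x y. V (x + y) = (\<lambda>n. V x n + V y n))
         \<and> (\<forall>r x. V (r *\<^sub>R x) = (\<lambda>n. of_real r * V x n))
         \<and> bij_betw V UNIV Yspace
         \<and> (\<forall>x. Ynorm (V x) = norm x)
         \<and> (\<forall>c\<in>Xspace. V (j c) = c)"
    using V_add V_scale V_Y V_j by simp
  thus ?thesis by (intro exI[where x=V])
qed


end
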